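(* For each $n\ge1$, the number of spanning forests of $\Gamma_n$ equals $T_n(2,1)=T_{2,n}(2,1)+3N_n(2,1)+M_n(2,1)$, where, writing $T_2,N,M$ for $T_{2,n}(2,1),N_n(2,1),M_n(2,1)$, $$T_{2,n+1}(2,1)=6T_2^2N+3T_2N^2,$$ $$N_{n+1}(2,1)=T_2^2M+7T_2N^2+2T_2NM+4N^3+N^2M,$$ $$M_{n+1}(2,1)=12T_2NM+3T_2M^2+14N^3+24N^2M+9NM^2+M^3,$$ with $T_{2,1}(2,1)=3$, $N_1(2,1)=M_1(2,1)=1$.
   Context: Graphs are finite; multiple edges are allowed. For a graph $G$, a spanning subgraph $A$ has vertex set $V(G)$ and edge set $E(A)\subseteq E(G)$; $k(A)$ is its number of components, $r(A)=|V(G)|-k(A)$, $n(A)=|E(A)|-r(A)$; the weight of $A$ is $(x-1)^{r(G)-r(A)}(y-1)^{n(A)}$ and the Tutte polynomial $T(G;x,y)$ is the sum of the weights of all spanning subgraphs. Sierpiński graphs $\Gamma_n$ ($n\ge1$), each with three outmost vertices top, left, right: $\Gamma_1$ is the triangle $K_3$; $\Gamma_{n+1}$ is obtained from three disjoint copies $G_1,G_2,G_3$ of $\Gamma_n$ by identifying left$(G_1)$ with top$(G_2)$, right$(G_1)$ with top$(G_3)$, right$(G_2)$ with left$(G_3)$; its outmost vertices are top$(G_1)$, left$(G_2)$, right$(G_3)$. $T_n=T(\Gamma_n;x,y)$. $T_{2,n}$ (resp. $T_{1,n}$, $T_{0,n}$) is the sum of the weights of the spanning subgraphs of $\Gamma_n$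 in which the three outmost vertices lie in one component (resp. left and right outmost in one component, top in another; resp. the three in three distinct components). $N_n(x,y)=T_{1,n}/(x-1)$ and $M_n(x,y)=T_{0,n}/(x-1)^2$, which are polynomials. A spanning forest is an acyclic spanning subgraph. *)

theory Defs
  imports Main "HOL-Library.Multiset" Complex_Main
begin

text \<open>A finite multigraph is given by a list of edges; the edge identities are the
list positions (so parallel edges are allowed), each edge having two endpoints.
The vertex set is the set of endpoints (the Sierpinski graphs have no isolated vertices).\<close>

type_synonym 'v mgraph = "('v \<times> 'v) list"

definition verts :: "'v mgraph \<Rightarrow> 'v set" where
  "verts G = fst ` set G \<union> snd ` set G"

definition edges :: "'v mgraph \<Rightarrow> nat set" where
  "edges G = {..<length G}"

definition conn :: "'v mgraph \<Rightarrow> nat set \<Rightarrow> 'v \<Rightarrow> 'v \<Rightarrow> bool" where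
  "conn G A u v \<longleftrightarrow> (u, v) \<in> (\<Union>i\<in>A \<inter> edges G. {G ! i, prod.swap (G ! i)})\<^sup>*"

definition ncomp :: "'v mgraph \<Rightarrow> nat set \<Rightarrow> nat" where
  "ncomp G A = card ((\<lambda>u. {v \<in> verts G. conn G A u v}) ` verts G)"

definition rank :: "'v mgraph \<Rightarrow> nat set \<Rightarrow> nat" where
  "rank G A = card (verts G) - ncomp G A"

definition nullity :: "'v mgraph \<Rightarrow> nat set \<Rightarrow> nat" where
  "nullity G A = card A - rank G A"

definition tutte_weight :: "'v mgraph \<Rightarrow> real \<Rightarrow> real \<Rightarrow> nat set \<Rightarrow> real" where
  "tutte_weight G x y A = (x - 1) ^ (rank G (edges G) - rank G A) * (y - 1) ^ (nullity G A)"

definition tutte :: "'v mgraph \<Rightarrow> real \<Rightarrow> real \<Rightarrow> real" where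
  "tutte G x y = (\<Sum>A \<in> Pow (edges G). tutte_weight G x y A)"

definition has_cycle :: "'v mgraph \<Rightarrow> nat set \<Rightarrow> bool" where
  "has_cycle G A \<longleftrightarrow> (\<exists>es vs. es \<noteq> [] \<and> distinct es \<and> set es \<subseteq> A \<inter> edges G
      \<and> length vs = Suc (length es) \<and> hd vs = last vs
      \<and> (\<forall>i < length es. G ! (es ! i) = (vs ! i, vs ! Suc i)
                        \<or> G ! (es ! i) = (vs ! Suc i, vs ! i)))"

definition spanning_forests :: "'v mgraph \<Rightarrow> nat set set" where
  "spanning_forests G = {A. A \<subseteq> edges G \<and> \<not> has_cycle G A}"

text \<open>Vertices are lattice points; Gamma_n has top (0,0), left (2^(n-1),0), right (0,2^(n-1)).
Gamma_(n+1) consists of Gamma_n (G1), Gamma_n shifted by (2^(n-1),0) (G2, its top is left(G1))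
and Gamma_n shifted by (0,2^(n-1)) (G3, its top is right(G1), its left is right(G2)).\<close>

definition shift :: "nat \<times> nat \<Rightarrow> (nat \<times> nat) \<times> (nat \<times> nat) \<Rightarrow> (nat \<times> nat) \<times> (nat \<times> nat)" where
  "shift d e = ((fst (fst e) + fst d, snd (fst e) + snd d), (fst (snd e) + fst d, snd (snd e) + snd d))"

fun sierpinski :: "nat \<Rightarrow> (nat \<times> nat) mgraph" where
  "sierpinski 0 = []"
| "sierpinski (Suc 0) = [((0,0),(1,0)), ((0,0),(0,1)), ((1,0),(0,1))]"
| "sierpinski (Suc (Suc n)) =
     (let E = sierpinski (Suc n); s = 2 ^ n
      in E @ map (shift (s, 0)) E @ map (shift (0, s)) E)"

definition s_top :: "nat \<Rightarrow> nat \<times> nat" where "s_top n = (0, 0)"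
definition s_left :: "nat \<Rightarrow> nat \<times> nat" where "s_left n = (2 ^ (n - 1), 0)"
definition s_right :: "nat \<Rightarrow> nat \<times> nat" where "s_right n = (0, 2 ^ (n - 1))"

definition Tn :: "nat \<Rightarrow> real \<Rightarrow> real \<Rightarrow> real" where
  "Tn n x y = tutte (sierpinski n) x y"

definition T2n :: "nat \<Rightarrow> real \<Rightarrow> real \<Rightarrow> real" where
  "T2n n x y = (\<Sum>A \<in> {A \<in> Pow (edges (sierpinski n)).
      conn (sierpinski n) A (s_top n) (s_left n) \<and> conn (sierpinski n) A (s_top n) (s_right n)}.
      tutte_weight (sierpinski n) x y A)"

definition T1n :: "nat \<Rightarrow> real \<Rightarrow> real \<Rightarrow> real" where
  "T1n n x y = (\<Sum>A \<in> {A \<in> Pow (edges (sierpinski n)).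
      conn (sierpinski n) A (s_left n) (s_right n) \<and> \<not> conn (sierpinski n) A (s_top n) (s_left n)}.
      tutte_weight (sierpinski n) x y A)"

definition T0n :: "nat \<Rightarrow> real \<Rightarrow> real \<Rightarrow> real" where
  "T0n n x y = (\<Sum>A \<in> {A \<in> Pow (edges (sierpinski n)).
      \<not> conn (sierpinski n) A (s_top n) (s_left n) \<and> \<not> conn (sierpinski n) A (s_top n) (s_right n)
      \<and> \<not> conn (sierpinski n) A (s_left n) (s_right n)}.
      tutte_weight (sierpinski n) x y A)"

text \<open>N_n = T_{1,n}/(x-1), M_n = T_{0,n}/(x-1)^2 (as functions; they agree with the
polynomials wherever x \<noteq> 1, in particular at x = 2).\<close>
definition Nn :: "nat \<Rightarrow> real \<Rightarrow> real \<Rightarrow> real" where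
  "Nn n x y = T1n n x y / (x - 1)"

definition Mn :: "nat \<Rightarrow> real \<Rightarrow> real \<Rightarrow> real" where
  "Mn n x y = T0n n x y / (x - 1) ^ 2"

end

theory Submission
  imports Defs
begin

definition erel :: "'v mgraph \<Rightarrow> nat set \<Rightarrow> ('v \<times> 'v) set" where
  "erel G A = (\<Union>i\<in>A \<inter> edges G. {G ! i, prod.swap (G ! i)})"

lemma conn_erel: "conn G A u v \<longleftrightarrow> (u,v) \<in> (erel G A)\<^sup>*"
  by (simp add: conn_def erel_def)

lemma erel_sym: "(a,b) \<in> erel G A \<Longrightarrow> (b,a) \<in> erel G A"
proof -
  assume "(a,b) \<in> erel G A"
  then obtain i where i: "i \<in> A \<inter> edges G" "(a,b) = G!i \<or> (a,b) = prod.swap (G!i)" by (auto simp: erel_def)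
  hence "(b,a) = G!i \<or> (b,a) = prod.swap (G!i)" by (cases "G!i") auto
  thus ?thesis using i(1) by (auto simp: erel_def)
qed

lemma conn_refl[simp]: "conn G A u u"
  by (simp add: conn_erel)

lemma conn_sym: "conn G A u v \<Longrightarrow> conn G A v u"
proof -
  assume "conn G A u v"
  hence "(u,v) \<in> (erel G A)\<^sup>*" by (simp add: conn_erel)
  hence "(v,u) \<in> ((erel G A)\<inverse>)\<^sup>*" by (simp add: rtrancl_converse)
  moreover have "(erel G A)\<inverse> = erel G A" using erel_sym by auto
  ultimately show ?thesis by (simp add: conn_erel)
qed

lemma conn_trans: "conn G A u v \<Longrightarrow> conn G A v w \<Longrightarrow> conn G A u w"
  by (simp add: conn_erel)

lemma conn_mono: "A \<subseteq> B \<Longrightarrow> conn G A u v \<Longrightarrow> conn G B u v"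
proof -
  assume "A \<subseteq> B" "conn G A u v"
  moreover have "erel G A \<subseteq> erel G B" using \<open>A \<subseteq> B\<close> by (auto simp: erel_def)
  ultimately show ?thesis by (metis conn_erel rtrancl_mono subsetD)
qed

lemma conn_step: "i \<in> A \<Longrightarrow> i \<in> edges G \<Longrightarrow> G ! i = (a,b) \<Longrightarrow> conn G A a b"
  unfolding conn_erel erel_def by (rule r_into_rtrancl) force

lemma erel_insert: "e \<in> edges G \<Longrightarrow> erel G (insert e A) = erel G A \<union> {(fst (G!e), snd (G!e)), (snd (G!e), fst (G!e))}"
proof -
  assume "e \<in> edges G"
  moreover obtain a b where "G!e = (a,b)" by fastforce
  ultimately show ?thesis by (auto simp: erel_def)
qed

lemma rtrancl_insert_sym:
  "(u,v) \<in> (R \<union> {(a,b),(b,a)})\<^sup>* \<longleftrightarrow> (u,v) \<in> R\<^sup>* \<or> ((u,a) \<in> R\<^sup>* \<and> (b,v) \<in> R\<^sup>*) \<or> ((u,b) \<in> R\<^sup>* \<and> (a,v) \<in> R\<^sup>*)"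
  (is "?L \<longleftrightarrow> ?R")
proof
  assume ?L
  then show ?R
  proof (induction rule: rtrancl_induct)
    case base then show ?case by simp
  next
    case (step y z)
    from step.hyps(2) show ?case
    proof
      assume "(y,z) \<in> R"
      with step.IH show ?thesis by (meson rtrancl.rtrancl_into_rtrancl)
    next
      assume "(y,z) \<in> {(a,b),(b,a)}"
      with step.IH show ?thesis by auto
    qed
  qed
next
  have sub: "R\<^sup>* \<subseteq> (R \<union> {(a,b),(b,a)})\<^sup>*" by (rule rtrancl_mono) auto
  have ab: "(a,b) \<in> (R \<union> {(a,b),(b,a)})\<^sup>*" "(b,a) \<in> (R \<union> {(a,b),(b,a)})\<^sup>*" by auto
  assume ?R
  then show ?L using sub ab by (meson rtrancl_trans subsetD)
qed

lemma conn_insert: "e \<in> edges G \<Longrightarrow> conn G (insert e A) u v \<longleftrightarrow>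
   conn G A u v \<or> (conn G A u (fst (G!e)) \<and> conn G A (snd (G!e)) v) \<or> (conn G A u (snd (G!e)) \<and> conn G A (fst (G!e)) v)"
  unfolding conn_erel by (subst erel_insert, assumption, rule rtrancl_insert_sym)

lemma conn_empty[simp]: "conn G {} u v \<longleftrightarrow> u = v"
  by (simp add: conn_erel erel_def)

lemma erel_verts: "erel G A \<subseteq> verts G \<times> verts G"
proof
  fix p assume "p \<in> erel G A"
  then obtain i where i: "i < length G" "p = G!i \<or> p = prod.swap (G!i)" by (auto simp: erel_def edges_def)
  have m: "G!i \<in> set G" using i(1) by simp
  have "fst (G!i) \<in> verts G" "snd (G!i) \<in> verts G" using m unfolding verts_def by auto
  thus "p \<in> verts G \<times> verts G" using i(2) by (cases "G!i") auto
qed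

lemma conn_verts: "conn G A u v \<Longrightarrow> u \<noteq> v \<Longrightarrow> u \<in> verts G \<and> v \<in> verts G"
proof -
  assume c: "conn G A u v" "u \<noteq> v"
  hence "(u,v) \<in> (erel G A)\<^sup>+" by (simp add: conn_erel rtrancl_eq_or_trancl)
  moreover have "(erel G A)\<^sup>+ \<subseteq> verts G \<times> verts G" by (rule trancl_subset_Sigma[OF erel_verts])
  ultimately show ?thesis by blast
qed

lemma edge_verts: "e \<in> edges G \<Longrightarrow> fst (G!e) \<in> verts G \<and> snd (G!e) \<in> verts G"
  unfolding verts_def edges_def by auto

definition cl :: "'v mgraph \<Rightarrow> nat set \<Rightarrow> 'v \<Rightarrow> 'v set" where
  "cl G A u = {v \<in> verts G. conn G A u v}"

lemma ncomp_cl: "ncomp G A = card (cl G A ` verts G)"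
  by (simp add: ncomp_def cl_def)

lemma finite_verts[simp]: "finite (verts G)"
  by (simp add: verts_def)

lemma cl_eq: "conn G A u v \<Longrightarrow> cl G A u = cl G A v"
  unfolding cl_def by (auto intro: conn_trans conn_sym)

lemma ncomp_empty: "ncomp G {} = card (verts G)"
proof -
  have "cl G {} ` verts G = (\<lambda>u. {u}) ` verts G"
    by (rule image_cong) (auto simp: cl_def)
  thus ?thesis by (simp add: ncomp_cl card_image)
qed

lemma ncomp_le: "ncomp G A \<le> card (verts G)"
  by (simp add: ncomp_cl card_image_le)

lemma ncomp_insert:
  assumes e: "e \<in> edges G"
  defines "a \<equiv> fst (G!e)" and "b \<equiv> snd (G!e)"
  shows "ncomp G (insert e A) = (if conn G A a b then ncomp G A else ncomp G A - 1)
         \<and> (\<not> conn G A a b \<longrightarrow> ncomp G A \<ge> 2)"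
proof (cases "conn G A a b")
  case True
  have "cl G (insert e A) u = cl G A u" for u
  proof -
    have "conn G (insert e A) u v \<longleftrightarrow> conn G A u v" for v
      using True conn_insert[OF e, of A u v] unfolding a_def b_def
      by (meson conn_sym conn_trans)
    thus ?thesis by (simp add: cl_def)
  qed
  thus ?thesis using True by (simp add: ncomp_cl)
next
  case False
  have av: "a \<in> verts G" and bv: "b \<in> verts G" using edge_verts[OF e] by (auto simp: a_def b_def)
  let ?C = "cl G A ` verts G"
  have cl'': "cl G (insert e A) u = (if conn G A u a \<or> conn G A u b then cl G A a \<union> cl G A b else cl G A u)" for u
  proof -
    have ci: "conn G (insert e A) u v \<longleftrightarrow> conn G A u v \<or> (conn G A u a \<and> conn G A b v) \<or> (conn G A u b \<and> conn G A a v)" for v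
      using conn_insert[OF e] by (simp add: a_def b_def)
    have key: "conn G (insert e A) u v \<longleftrightarrow> (if conn G A u a \<or> conn G A u b then conn G A a v \<or> conn G A b v else conn G A u v)" for v
    proof (cases "conn G A u a")
      case T1: True
      have "\<not> conn G A u b" using T1 False conn_sym conn_trans by metis
      moreover have "conn G A u v \<longleftrightarrow> conn G A a v" using T1 conn_sym conn_trans by metis
      moreover have "conn G A b u \<longleftrightarrow> False" using calculation(1) conn_sym by metis
      ultimately show ?thesis using ci[of v] T1 by auto
    next
      case F1: False
      show ?thesis
      proof (cases "conn G A u b")
        case T2: True
        have "conn G A u v \<longleftrightarrow> conn G A b v" using T2 conn_sym conn_trans by metis
        thus ?thesis using ci[of v] T2 F1 by auto
      next
        case F2: False
        thus ?thesis using ci[of v] F1 by auto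
      qed
    qed
    show ?thesis unfolding cl_def using key by auto
  qed
  have bb: "b \<in> cl G A b" using bv by (simp add: cl_def)
  have nb: "b \<notin> cl G A a" using False by (simp add: cl_def)
  have ne: "cl G A a \<noteq> cl G A b" using bb nb by blast
  have notin: "cl G A a \<union> cl G A b \<notin> ?C"
  proof
    assume "cl G A a \<union> cl G A b \<in> ?C"
    then obtain u where u: "u \<in> verts G" "cl G A a \<union> cl G A b = cl G A u" by blast
    have "a \<in> cl G A a" using av by (simp add: cl_def)
    hence "a \<in> cl G A u" "b \<in> cl G A u" using u(2) bb by blast+
    hence "conn G A u a" "conn G A u b" by (simp_all add: cl_def)
    thus False using False by (meson conn_sym conn_trans)
  qed
  have img: "cl G (insert e A) ` verts G = insert (cl G A a \<union> cl G A b) (?C - {cl G A a, cl G A b})"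
  proof (rule set_eqI, rule iffI)
    fix c assume "c \<in> cl G (insert e A) ` verts G"
    then obtain u where u: "u \<in> verts G" "c = cl G (insert e A) u" by blast
    show "c \<in> insert (cl G A a \<union> cl G A b) (?C - {cl G A a, cl G A b})"
    proof (cases "conn G A u a \<or> conn G A u b")
      case True
      hence "c = cl G A a \<union> cl G A b" using u(2) cl''[of u] by simp
      thus ?thesis by blast
    next
      case F: False
      have "a \<notin> cl G A u" "b \<notin> cl G A u" using F by (simp_all add: cl_def)
      moreover have "a \<in> cl G A a" using av by (simp add: cl_def)
      ultimately have "cl G A u \<noteq> cl G A a" "cl G A u \<noteq> cl G A b" using bb by blast+
      moreover have "c = cl G A u" using u(2) cl''[of u] F by simp
      ultimately show ?thesis using u(1) by blast
    qed
  next
    fix c assume c: "c \<in> insert (cl G A a \<union> cl G A b) (?C - {cl G A a, cl G A b})"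
    show "c \<in> cl G (insert e A) ` verts G"
    proof (cases "c = cl G A a \<union> cl G A b")
      case True
      have "cl G (insert e A) a = cl G A a \<union> cl G A b" using cl''[of a] by simp
      thus ?thesis using True av by blast
    next
      case F: False
      then obtain u where u: "u \<in> verts G" "c = cl G A u" "cl G A u \<noteq> cl G A a" "cl G A u \<noteq> cl G A b"
        using c by blast
      have "\<not> conn G A u a" "\<not> conn G A u b" using u(3,4) cl_eq by metis+
      hence "cl G (insert e A) u = c" using cl''[of u] u(2) by simp
      thus ?thesis using u(1) by blast
    qed
  qed
  have aC: "cl G A a \<in> ?C" and bC: "cl G A b \<in> ?C" using av bv by auto
  have fin: "finite ?C" by simp
  have sub: "{cl G A a, cl G A b} \<subseteq> ?C" using aC bC by auto
  have c2: "card {cl G A a, cl G A b} = 2" using ne by simp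
  have cd: "card (?C - {cl G A a, cl G A b}) = card ?C - 2"
    using card_Diff_subset[OF _ sub] c2 by simp
  have ge: "card ?C \<ge> 2" using card_mono[OF fin sub] c2 by simp
  have ni: "cl G A a \<union> cl G A b \<notin> ?C - {cl G A a, cl G A b}" using notin by blast
  have "card (cl G (insert e A) ` verts G) = Suc (card (?C - {cl G A a, cl G A b}))"
    unfolding img by (rule card_insert_disjoint) (use fin ni in auto)
  hence "ncomp G (insert e A) = ncomp G A - 1" using cd ge by (simp add: ncomp_cl)
  moreover have "ncomp G A \<ge> 2" using ge by (simp add: ncomp_cl)
  ultimately show ?thesis using False by simp
qed

lemma ncomp_bound: "A \<subseteq> edges G \<Longrightarrow> card (verts G) \<le> card A + ncomp G A"
proof -
  assume s: "A \<subseteq> edges G"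
  have "finite A" using s finite_subset by (auto simp: edges_def)
  from this s show ?thesis
  proof (induction A rule: finite_induct)
    case empty thus ?case by (simp add: ncomp_empty)
  next
    case (insert e A)
    hence e: "e \<in> edges G" by auto
    have "card (verts G) \<le> card A + ncomp G A" using insert by auto
    thus ?case using ncomp_insert[OF e, of A] insert(1,2) by (auto split: if_splits)
  qed
qed

lemma nullity_eq: "A \<subseteq> edges G \<Longrightarrow> nullity G A = card A + ncomp G A - card (verts G)"
  using ncomp_bound[of A G] ncomp_le[of G A] by (simp add: nullity_def rank_def)

lemma nullity_insert:
  assumes "A \<subseteq> edges G" "e \<in> edges G" "e \<notin> A"
  shows "nullity G (insert e A) = nullity G A + (if conn G A (fst (G!e)) (snd (G!e)) then 1 else 0)"
proof -
  have fA: "finite A" using assms(1) finite_subset by (auto simp: edges_def)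
  have b: "card (verts G) \<le> card A + ncomp G A" using ncomp_bound[OF assms(1)] .
  have "insert e A \<subseteq> edges G" using assms by auto
  hence eq: "nullity G (insert e A) = card (insert e A) + ncomp G (insert e A) - card (verts G)" by (rule nullity_eq)
  have ci: "card (insert e A) = Suc (card A)" using fA assms(3) by simp
  show ?thesis
  proof (cases "conn G A (fst (G!e)) (snd (G!e))")
    case True
    thus ?thesis using ncomp_insert[OF assms(2), of A] eq nullity_eq[OF assms(1)] ci b by simp
  next
    case False
    hence "ncomp G (insert e A) = ncomp G A - 1" "ncomp G A \<ge> 2" using ncomp_insert[OF assms(2), of A] by auto
    thus ?thesis using False eq nullity_eq[OF assms(1)] ci b by simp
  qed
qed

lemma nullity_empty[simp]: "nullity G {} = 0"
  by (simp add: nullity_eq ncomp_empty)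

definition walk :: "'v mgraph \<Rightarrow> nat list \<Rightarrow> 'v list \<Rightarrow> bool" where
  "walk G es vs \<longleftrightarrow> length vs = Suc (length es) \<and> set es \<subseteq> edges G
     \<and> (\<forall>i<length es. G!(es!i) = (vs!i, vs!Suc i) \<or> G!(es!i) = (vs!Suc i, vs!i))"

lemma has_cycle_walk: "has_cycle G A \<longleftrightarrow> (\<exists>es vs. es \<noteq> [] \<and> distinct es \<and> set es \<subseteq> A \<and> walk G es vs \<and> hd vs = last vs)"
  unfolding has_cycle_def walk_def by blast

lemma walk_conn: "walk G es vs \<Longrightarrow> j \<le> length es \<Longrightarrow> i \<le> j \<Longrightarrow> (\<forall>m. i \<le> m \<and> m < j \<longrightarrow> es!m \<in> B) \<Longrightarrow> conn G B (vs!i) (vs!j)"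
proof (induction j)
  case 0 thus ?case by simp
next
  case (Suc j)
  show ?case
  proof (cases "i = Suc j")
    case True thus ?thesis by simp
  next
    case False
    hence ij: "i \<le> j" using Suc by simp
    have c1: "conn G B (vs!i) (vs!j)" using Suc ij by auto
    have jB: "es!j \<in> B" using Suc ij by auto
    have jE: "es!j \<in> edges G" using Suc.prems(1,2) unfolding walk_def by auto
    have "G!(es!j) = (vs!j, vs!Suc j) \<or> G!(es!j) = (vs!Suc j, vs!j)" using Suc.prems(1,2) unfolding walk_def by auto
    hence "conn G B (vs!j) (vs!Suc j)" using conn_step[OF jB jE] conn_sym by metis
    thus ?thesis using c1 conn_trans by metis
  qed
qed

lemma walk_path: "conn G A u v \<Longrightarrow> \<exists>es vs. walk G es vs \<and> set es \<subseteq> A \<and> distinct vs \<and> hd vs = u \<and> last vs = v"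
  unfolding conn_erel
proof (induction rule: rtrancl_induct)
  case base
  show ?case by (rule exI[of _ "[]"], rule exI[of _ "[u]"]) (simp add: walk_def)
next
  case (step y z)
  obtain es vs where w: "walk G es vs" "set es \<subseteq> A" "distinct vs" "hd vs = u" "last vs = y" using step.IH by blast
  obtain i where i: "i \<in> A" "i \<in> edges G" "G!i = (y,z) \<or> G!i = (z,y)"
    using step.hyps(2) unfolding erel_def by (auto simp: prod_eq_iff)
  have lv: "length vs = Suc (length es)" using w(1) walk_def by auto
  have vsne: "vs \<noteq> []" using lv by auto
  show ?case
  proof (cases "z \<in> set vs")
    case True
    then obtain j where j: "j < length vs" "vs!j = z" by (auto simp: in_set_conv_nth)
    have tk: "take (Suc j) vs = take j vs @ [vs!j]" using j(1) by (simp add: take_Suc_conv_app_nth)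
    have "walk G (take j es) (take (Suc j) vs)"
      using w(1) j(1) lv unfolding walk_def by (auto dest: in_set_takeD)
    moreover have "hd (take (Suc j) vs) = u" using w(4) vsne by (cases vs) auto
    moreover have "last (take (Suc j) vs) = z" using tk j by simp
    moreover have "set (take j es) \<subseteq> A" using w(2) by (auto dest: in_set_takeD)
    moreover have "distinct (take (Suc j) vs)" using w(3) by simp
    ultimately show ?thesis by blast
  next
    case False
    have lvs: "vs ! length es = y" using w(5) lv vsne by (simp add: last_conv_nth)
    have "walk G (es @ [i]) (vs @ [z])"
      unfolding walk_def
    proof (intro conjI allI impI)
      show "length (vs @ [z]) = Suc (length (es @ [i]))" using lv by simp
      show "set (es @ [i]) \<subseteq> edges G" using w(1) i(2) by (auto simp: walk_def)
    next
      fix k assume k: "k < length (es @ [i])"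
      show "G ! ((es @ [i]) ! k) = ((vs @ [z]) ! k, (vs @ [z]) ! Suc k) \<or>
            G ! ((es @ [i]) ! k) = ((vs @ [z]) ! Suc k, (vs @ [z]) ! k)"
      proof (cases "k < length es")
        case True
        thus ?thesis using w(1) lv unfolding walk_def by (auto simp: nth_append)
      next
        case False
        hence "k = length es" using k by simp
        thus ?thesis using i(3) lv lvs by (auto simp: nth_append)
      qed
    qed
    moreover have "distinct (vs @ [z])" using w(3) False by simp
    moreover have "hd (vs @ [z]) = u" using w(4) vsne by simp
    moreover have "set (es @ [i]) \<subseteq> A" using w(2) i(1) by simp
    ultimately show ?thesis by (metis last_snoc)
  qed
qed

lemma walk_distinct_edges: "walk G es vs \<Longrightarrow> distinct vs \<Longrightarrow> distinct es"
proof -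
  assume w: "walk G es vs" and d: "distinct vs"
  have lv: "length vs = Suc (length es)" using w walk_def by auto
  have st: "\<And>k. k < length es \<Longrightarrow> G!(es!k) = (vs!k, vs!Suc k) \<or> G!(es!k) = (vs!Suc k, vs!k)"
    using w unfolding walk_def by auto
  have "es!i \<noteq> es!j" if ij: "i < j" "j < length es" for i j
  proof
    assume eq: "es!i = es!j"
    have "vs!i = vs!j \<or> vs!i = vs!Suc j"
      using st[of i] st[of j] ij eq by auto
    moreover have "vs!i \<noteq> vs!j" "vs!i \<noteq> vs!Suc j" using d ij lv by (simp_all add: nth_eq_iff_index_eq)
    ultimately show False by blast
  qed
  thus ?thesis unfolding distinct_conv_nth by (metis linorder_neqE_nat)
qed

lemma has_cycle_mono: "A \<subseteq> B \<Longrightarrow> has_cycle G A \<Longrightarrow> has_cycle G B"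
  unfolding has_cycle_walk by blast

lemma cycle_nullity: "A \<subseteq> edges G \<Longrightarrow> has_cycle G A \<longleftrightarrow> nullity G A \<noteq> 0"
proof -
  assume s: "A \<subseteq> edges G"
  have "finite A" using s finite_subset by (auto simp: edges_def)
  from this s show ?thesis
  proof (induction A rule: finite_induct)
    case empty thus ?case by (simp add: has_cycle_walk)
  next
    case (insert e A)
    have e: "e \<in> edges G" and sA: "A \<subseteq> edges G" using insert by auto
    define a where "a = fst (G!e)"
    define b where "b = snd (G!e)"
    have Ge: "G!e = (a,b)" by (simp add: a_def b_def)
    have nul: "nullity G (insert e A) = nullity G A + (if conn G A a b then 1 else 0)"
      using nullity_insert[OF sA e insert(2)] by (simp add: a_def b_def)
    show ?case
    proof (cases "conn G A a b")
      case True
      obtain es vs where w: "walk G es vs" "set es \<subseteq> A" "distinct vs" "hd vs = b" "last vs = a"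
        using walk_path[OF conn_sym[OF True]] by blast
      have lv: "length vs = Suc (length es)" using w(1) walk_def by auto
      have vsne: "vs \<noteq> []" using lv by auto
      have lvs: "vs ! length es = a" using w(5) lv vsne by (simp add: last_conv_nth)
      have de: "distinct es" by (rule walk_distinct_edges[OF w(1,3)])
      have "walk G (es @ [e]) (vs @ [b])"
        unfolding walk_def
      proof (intro conjI allI impI)
        show "length (vs @ [b]) = Suc (length (es @ [e]))" using lv by simp
        show "set (es @ [e]) \<subseteq> edges G" using w(1) e by (auto simp: walk_def)
      next
        fix k assume k: "k < length (es @ [e])"
        show "G ! ((es @ [e]) ! k) = ((vs @ [b]) ! k, (vs @ [b]) ! Suc k) \<or>
              G ! ((es @ [e]) ! k) = ((vs @ [b]) ! Suc k, (vs @ [b]) ! k)"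
        proof (cases "k < length es")
          case True
          thus ?thesis using w(1) lv unfolding walk_def by (auto simp: nth_append)
        next
          case False
          hence "k = length es" using k by simp
          thus ?thesis using Ge lv lvs by (auto simp: nth_append)
        qed
      qed
      moreover have "distinct (es @ [e])" using de w(2) insert(2) by auto
      moreover have "set (es @ [e]) \<subseteq> insert e A" using w(2) by auto
      moreover have "hd (vs @ [b]) = last (vs @ [b])" using w(4) vsne by simp
      ultimately have "has_cycle G (insert e A)" unfolding has_cycle_walk by blast
      thus ?thesis using nul True by simp
    next
      case False
      have "has_cycle G (insert e A) \<longleftrightarrow> has_cycle G A"
      proof
        assume "has_cycle G (insert e A)"
        then obtain es vs where c: "es \<noteq> []" "distinct es" "set es \<subseteq> insert e A" "walk G es vs" "hd vs = last vs"
          unfolding has_cycle_walk by blast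
        show "has_cycle G A"
        proof (cases "e \<in> set es")
          case False
          hence "set es \<subseteq> A" using c(3) by auto
          thus ?thesis using c unfolding has_cycle_walk by blast
        next
          case True
          then obtain k where k: "k < length es" "es!k = e" by (auto simp: in_set_conv_nth)
          have lv: "length vs = Suc (length es)" using c(4) walk_def by auto
          have vsne: "vs \<noteq> []" using lv by auto
          have oth: "\<forall>m. m < length es \<and> m \<noteq> k \<longrightarrow> es!m \<in> A"
          proof (intro allI impI)
            fix m assume m: "m < length es \<and> m \<noteq> k"
            hence "es!m \<noteq> e" using k c(2) by (metis nth_eq_iff_index_eq)
            moreover have "es!m \<in> insert e A" using m c(3) nth_mem by blast
            ultimately show "es!m \<in> A" by simp
          qed
          have c1: "conn G A (vs!0) (vs!k)" using walk_conn[OF c(4), of k 0 A] k oth by auto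
          have c2: "conn G A (vs!Suc k) (vs!length es)" using walk_conn[OF c(4), of "length es" "Suc k" A] k oth by auto
          have "vs!0 = vs!length es" using c(5) vsne lv by (simp add: hd_conv_nth last_conv_nth)
          hence c3: "conn G A (vs!Suc k) (vs!k)" using c1 c2 conn_trans by metis
          have "G!e = (vs!k, vs!Suc k) \<or> G!e = (vs!Suc k, vs!k)" using c(4) k unfolding walk_def by auto
          hence "conn G A a b" using c3 Ge conn_sym by auto
          thus ?thesis using False by simp
        qed
      next
        assume "has_cycle G A" thus "has_cycle G (insert e A)" by (rule has_cycle_mono[rotated]) auto
      qed
      thus ?thesis using nul False insert.IH sA by simp
    qed
  qed
qed

lemma edges_append: "A \<subseteq> edges G \<Longrightarrow> erel (G @ P) A = erel G A"
  unfolding erel_def edges_def by (rule SUP_cong) (auto simp: nth_append)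

lemma conn_append: "A \<subseteq> edges G \<Longrightarrow> conn (G @ P) A u v \<longleftrightarrow> conn G A u v"
  by (simp add: conn_erel edges_append)

lemma verts_append: "verts (G @ P) = verts G \<union> verts P"
  by (auto simp: verts_def)

lemma verts_map: "verts (map (map_prod f f) G) = f ` verts G"
  by (force simp: verts_def)

lemma edges_map[simp]: "edges (map g G) = edges G"
  by (simp add: edges_def)

lemma erel_map: "erel (map (map_prod f f) G) A = map_prod f f ` erel G A"
proof -
  have "\<And>i. i < length G \<Longrightarrow> {map (map_prod f f) G ! i, prod.swap (map (map_prod f f) G ! i)} = map_prod f f ` {G!i, prod.swap(G!i)}"
    by (case_tac "G!i") auto
  thus ?thesis unfolding erel_def image_UN by (intro SUP_cong) (auto simp: edges_def)
qed

lemma ncomp_verts_conn: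
  assumes "verts G = verts G'" "\<And>u v. u \<in> verts G \<Longrightarrow> v \<in> verts G \<Longrightarrow> conn G A u v \<longleftrightarrow> conn G' A' u v"
  shows "ncomp G A = ncomp G' A'"
proof -
  have "cl G A u = cl G' A' u" if "u \<in> verts G" for u using assms that by (auto simp: cl_def)
  thus ?thesis using assms(1) by (simp add: ncomp_cl cong: image_cong)
qed

lemma nullity_append: "A \<subseteq> edges G \<Longrightarrow> verts P \<subseteq> verts G \<Longrightarrow> nullity (G @ P) A = nullity G A"
proof -
  assume a: "A \<subseteq> edges G" "verts P \<subseteq> verts G"
  have v: "verts (G @ P) = verts G" using a(2) by (auto simp: verts_append)
  have "ncomp (G @ P) A = ncomp G A" by (rule ncomp_verts_conn) (use v conn_append[OF a(1)] in auto)
  thus ?thesis unfolding nullity_def rank_def using v by simp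
qed

section \<open>Quotient\<close>

locale quot =
  fixes G :: "'a mgraph" and f :: "'a \<Rightarrow> 'b" and P :: "('a \<times> 'a) list"
  assumes Pf: "\<forall>p\<in>set P. f (fst p) = f (snd p)"
  and Pv: "verts P \<subseteq> verts G"
  and ker: "\<forall>u\<in>verts G. \<forall>v\<in>verts G. f u = f v \<longrightarrow> conn (G @ P) {length G..<length G + length P} u v"
begin

abbreviation "H \<equiv> map (map_prod f f) G"
abbreviation "GP \<equiv> G @ P"
abbreviation "PI \<equiv> {length G..<length G + length P}"

lemma vGP: "verts GP = verts G" using Pv by (auto simp: verts_append)

lemma Q1a: "conn GP (A \<union> PI) u v \<Longrightarrow> A \<subseteq> edges G \<Longrightarrow> conn H A (f u) (f v)"
  unfolding conn_erel[of GP]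
proof (induction rule: rtrancl_induct)
  case base thus ?case by simp
next
  case (step y z)
  then obtain i where i: "i \<in> (A \<union> PI) \<inter> edges GP" "(y,z) = GP!i \<or> (y,z) = prod.swap (GP!i)"
    unfolding erel_def by blast
  show ?case
  proof (cases "i < length G")
    case True
    hence iA: "i \<in> A" using i(1) by auto
    have "GP!i = G!i" using True by (simp add: nth_append)
    hence "(f y, f z) = H!i \<or> (f y, f z) = prod.swap (H!i)" using i(2) True
      by (cases "G!i") auto
    hence "conn H A (f y) (f z)" using iA True conn_step[of i A H] conn_sym
      by (metis edges_def edges_map lessThan_iff prod.collapse swap_simp)
    thus ?thesis using step conn_trans by metis
  next
    case False
    hence "GP!i \<in> set P" using i(1) by (auto simp: nth_append edges_def)
    moreover obtain c d where cd: "GP!i = (c,d)" by fastforce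
    ultimately have "f c = f d" using Pf by fastforce
    hence "f y = f z" using i(2) cd by auto
    thus ?thesis using step by simp
  qed
qed

lemma Q1b:
  assumes A: "A \<subseteq> edges G" and u: "u \<in> verts G" and c: "conn H A (f u) w"
  shows "\<exists>u'\<in>verts G. f u' = w \<and> conn GP (A \<union> PI) u u'"
  using c unfolding conn_erel[of H]
proof (induction rule: rtrancl_induct)
  case base thus ?case using u by auto
next
  case (step y z)
  then obtain u' where u': "u' \<in> verts G" "f u' = y" "conn GP (A \<union> PI) u u'" by blast
  from step.hyps(2) obtain i where i: "i \<in> A" "i < length G" "(y,z) = H!i \<or> (y,z) = prod.swap (H!i)"
    unfolding erel_def edges_def by auto
  obtain a b where ab: "G!i = (a,b)" by fastforce
  have av: "a \<in> verts G" "b \<in> verts G" using edge_verts[of i G] i(2) ab by (auto simp: edges_def)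
  have Hi: "H!i = (f a, f b)" using ab i(2) by simp
  have gpi: "GP!i = (a,b)" using ab i(2) by (simp add: nth_append)
  have ie: "i \<in> A \<union> PI" "i \<in> edges GP" using i by (auto simp: edges_def)
  have cab: "conn GP (A \<union> PI) a b" by (rule conn_step[OF ie gpi])
  show ?case
  proof (cases "(y,z) = H!i")
    case True
    hence "f u' = f a" "z = f b" using Hi u'(2) by auto
    hence "conn GP PI u' a" using ker u'(1) av by blast
    hence "conn GP (A \<union> PI) u' a" by (rule conn_mono[rotated]) auto
    hence "conn GP (A \<union> PI) u b" using u'(3) cab conn_trans by metis
    thus ?thesis using av \<open>z = f b\<close> by blast
  next
    case False
    hence "f u' = f b" "z = f a" using Hi u'(2) i(3) by auto
    hence "conn GP PI u' b" using ker u'(1) av by blast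
    hence "conn GP (A \<union> PI) u' b" by (rule conn_mono[rotated]) auto
    hence "conn GP (A \<union> PI) u a" using u'(3) cab conn_trans conn_sym by metis
    thus ?thesis using av \<open>z = f a\<close> by blast
  qed
qed

lemma Q1: "A \<subseteq> edges G \<Longrightarrow> u \<in> verts G \<Longrightarrow> v \<in> verts G \<Longrightarrow> conn H A (f u) (f v) \<longleftrightarrow> conn GP (A \<union> PI) u v"
proof
  assume A: "A \<subseteq> edges G" and uv: "u \<in> verts G" "v \<in> verts G" and c: "conn H A (f u) (f v)"
  obtain u' where u': "u' \<in> verts G" "f u' = f v" "conn GP (A \<union> PI) u u'" using Q1b[OF A uv(1) c] by blast
  have "conn GP PI u' v" using ker u' uv by blast
  hence "conn GP (A \<union> PI) u' v" by (rule conn_mono[rotated]) auto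
  thus "conn GP (A \<union> PI) u v" using u'(3) conn_trans by metis
next
  assume "A \<subseteq> edges G" "conn GP (A \<union> PI) u v"
  thus "conn H A (f u) (f v)" using Q1a by blast
qed

lemma Q2: "A \<subseteq> edges G \<Longrightarrow> ncomp H A = ncomp GP (A \<union> PI)"
proof -
  assume A: "A \<subseteq> edges G"
  let ?A' = "A \<union> PI"
  have vH: "verts H = f ` verts G" by (rule verts_map)
  have clf: "cl H A (f u) = f ` cl GP ?A' u" if u: "u \<in> verts G" for u
  proof
    show "cl H A (f u) \<subseteq> f ` cl GP ?A' u"
    proof
      fix w assume "w \<in> cl H A (f u)"
      then obtain v where v: "v \<in> verts G" "w = f v" "conn H A (f u) (f v)" using vH by (auto simp: cl_def)
      hence "conn GP ?A' u v" using Q1[OF A u v(1)] by simp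
      thus "w \<in> f ` cl GP ?A' u" using v vGP by (auto simp: cl_def)
    qed
  next
    show "f ` cl GP ?A' u \<subseteq> cl H A (f u)"
    proof
      fix w assume "w \<in> f ` cl GP ?A' u"
      then obtain v where v: "v \<in> verts G" "w = f v" "conn GP ?A' u v" using vGP by (auto simp: cl_def)
      hence "conn H A (f u) (f v)" using Q1[OF A u v(1)] by simp
      thus "w \<in> cl H A (f u)" using v vH by (auto simp: cl_def)
    qed
  qed
  have img: "cl H A ` verts H = (\<lambda>c. f ` c) ` (cl GP ?A' ` verts G)"
    unfolding vH image_image using clf by (auto cong: image_cong)
  have inj: "inj_on (\<lambda>c. f ` c) (cl GP ?A' ` verts G)"
  proof (rule inj_onI)
    fix c1 c2 assume c1: "c1 \<in> cl GP ?A' ` verts G" and c2: "c2 \<in> cl GP ?A' ` verts G" and eq: "f ` c1 = f ` c2"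
    obtain u1 where u1: "u1 \<in> verts G" "c1 = cl GP ?A' u1" using c1 by blast
    obtain u2 where u2: "u2 \<in> verts G" "c2 = cl GP ?A' u2" using c2 by blast
    have "u2 \<in> cl GP ?A' u2" using u2 vGP by (simp add: cl_def)
    hence "f u2 \<in> f ` c1" using eq u2 by auto
    then obtain v where v: "v \<in> cl GP ?A' u1" "f v = f u2" using u1 by auto
    have vv: "v \<in> verts G" "conn GP ?A' u1 v" using v vGP by (auto simp: cl_def)
    have "conn GP PI v u2" using ker vv u2 v by blast
    hence "conn GP ?A' v u2" by (rule conn_mono[rotated]) auto
    hence "conn GP ?A' u1 u2" using vv conn_trans by metis
    thus "c1 = c2" using u1 u2 cl_eq by metis
  qed
  show ?thesis unfolding ncomp_cl img card_image[OF inj] using vGP by simp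
qed

lemma Q3:
  assumes A: "A \<subseteq> edges G" and forest: "nullity GP PI = 0"
  shows "nullity H A = nullity GP (A \<union> PI)"
proof -
  have e0: "ncomp H {} = ncomp GP PI" using Q2[of "{}"] by simp
  have vH: "card (verts H) = ncomp GP PI" using e0 ncomp_empty[of H] by simp
  have PIe: "PI \<subseteq> edges GP" by (auto simp: edges_def)
  have "card PI + ncomp GP PI - card (verts G) = 0" using nullity_eq[OF PIe] forest vGP by simp
  moreover have "card (verts G) \<le> card PI + ncomp GP PI" using ncomp_bound[OF PIe] vGP by simp
  ultimately have cv: "card (verts G) = card PI + ncomp GP PI" by simp
  have AE: "A \<union> PI \<subseteq> edges GP" using A by (auto simp: edges_def)
  have dis: "A \<inter> PI = {}" using A by (auto simp: edges_def)
  have fA: "finite A" using A finite_subset by (auto simp: edges_def)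
  have "nullity H A = card A + ncomp H A - card (verts H)" using nullity_eq[of A H] A by simp
  moreover have "nullity GP (A \<union> PI) = card (A \<union> PI) + ncomp GP (A \<union> PI) - card (verts GP)"
    using nullity_eq[OF AE] .
  moreover have "card (A \<union> PI) = card A + card PI" using card_Un_disjoint[OF fA _ dis] by simp
  ultimately show ?thesis using Q2[OF A] vH cv vGP by simp
qed

end

definition tg :: "nat \<Rightarrow> ('v \<times> 'v) \<Rightarrow> ((nat \<times> 'v) \<times> (nat \<times> 'v))" where
  "tg i = map_prod (Pair i) (Pair i)"

definition D3 :: "'v mgraph \<Rightarrow> (nat \<times> 'v) mgraph" where
  "D3 E = map (tg 0) E @ map (tg 1) E @ map (tg 2) E"

definition sel :: "'v mgraph \<Rightarrow> nat \<Rightarrow> nat set \<Rightarrow> nat set" where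
  "sel E i A = {k. k < length E \<and> i * length E + k \<in> A}"

lemma D3_len[simp]: "length (D3 E) = 3 * length E"
  by (simp add: D3_def)

lemma divmod_idx: "m < (L::nat) \<Longrightarrow> (i * L + m) div L = i \<and> (i * L + m) mod L = m"
proof -
  assume m: "m < L"
  hence L0: "L \<noteq> 0" by auto
  have "(m + i * L) div L = i + m div L" by (rule div_mult_self1[OF L0])
  moreover have "(m + i * L) mod L = m mod L" by (rule mod_mult_self1)
  ultimately show ?thesis using m by (simp add: add.commute)
qed

lemma D3_nth: "k < 3 * length E \<Longrightarrow> D3 E ! k = tg (k div length E) (E ! (k mod length E))"
proof -
  assume k: "k < 3 * length E"
  let ?L = "length E"
  consider "k < ?L" | "?L \<le> k" "k < 2 * ?L" | "2 * ?L \<le> k" by linarith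
  thus ?thesis
  proof cases
    case 1 thus ?thesis by (simp add: D3_def nth_append)
  next
    case 2
    have "k = 1 * ?L + (k - ?L)" "k - ?L < ?L" using 2 by auto
    hence "k div ?L = 1" "k mod ?L = k - ?L" using divmod_idx by metis+
    thus ?thesis using 2 \<open>k - ?L < ?L\<close> by (simp add: D3_def nth_append)
  next
    case 3
    have "k = 2 * ?L + (k - 2 * ?L)" "k - 2 * ?L < ?L" using 3 k by auto
    hence d: "k div ?L = 2" "k mod ?L = k - 2 * ?L" using divmod_idx by metis+
    have "\<not> k - ?L < ?L" "k - (?L + ?L) = k - 2 * ?L" using 3 by auto
    thus ?thesis using 3 k d by (simp add: D3_def nth_append)
  qed
qed

lemma idx_lt: "i < 3 \<Longrightarrow> m < (L::nat) \<Longrightarrow> i * L + m < 3 * L"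
proof -
  assume i: "i < 3" and m: "m < L"
  have "Suc i * L \<le> 3 * L" using i by (intro mult_le_mono1) simp
  moreover have "i * L + m < Suc i * L" using m by simp
  ultimately show ?thesis by linarith
qed

lemma D3_nth2: "i < 3 \<Longrightarrow> m < length E \<Longrightarrow> D3 E ! (i * length E + m) = tg i (E ! m)"
proof -
  assume i: "i < 3" and m: "m < length E"
  have "i * length E + m < 3 * length E" using i m by (rule idx_lt)
  moreover have "(i * length E + m) div length E = i" "(i * length E + m) mod length E = m" using divmod_idx[OF m] by auto
  ultimately show ?thesis using D3_nth by metis
qed

lemma sel_sub: "sel E i A \<subseteq> edges E" by (auto simp: sel_def edges_def)

lemma D1a:
  assumes "conn (D3 E) A (i,u) w"
  shows "fst w = i \<and> conn E (sel E i A) u (snd w)"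
  using assms unfolding conn_erel[of "D3 E"]
proof (induction rule: rtrancl_induct)
  case base thus ?case by simp
next
  case (step y z)
  from step.hyps(2) obtain k where k: "k \<in> A" "k < 3 * length E" "(y,z) = D3 E ! k \<or> (y,z) = prod.swap (D3 E ! k)"
    unfolding erel_def edges_def by auto
  let ?t = "k div length E" and ?m = "k mod length E"
  have Lp: "length E > 0" using k(2) by auto
  obtain a b where ab: "E ! ?m = (a,b)" by fastforce
  have Dk: "D3 E ! k = ((?t,a),(?t,b))" using D3_nth[OF k(2)] ab by (simp add: tg_def)
  have "fst y = ?t" "fst z = ?t" "(snd y, snd z) = (a,b) \<or> (snd y, snd z) = (b,a)" using k(3) Dk by auto
  hence ti: "?t = i" using step.IH by simp
  have "?t * length E + ?m = k" by simp
  hence ms: "?m \<in> sel E i A" using k(1) Lp ti by (simp add: sel_def)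
  have "conn E (sel E i A) a b" using conn_step[OF ms _ ab] Lp by (simp add: edges_def)
  hence "conn E (sel E i A) (snd y) (snd z)" using \<open>(snd y, snd z) = (a,b) \<or> (snd y, snd z) = (b,a)\<close> conn_sym by auto
  thus ?case using step.IH \<open>fst z = ?t\<close> ti conn_trans by metis
qed

lemma D1b:
  assumes i: "i < 3" and c: "conn E (sel E i A) u v"
  shows "conn (D3 E) A (i,u) (i,v)"
  using c unfolding conn_erel[of E]
proof (induction rule: rtrancl_induct)
  case base thus ?case by simp
next
  case (step y z)
  from step.hyps(2) obtain m where m: "m \<in> sel E i A" "(y,z) = E ! m \<or> (y,z) = prod.swap (E ! m)"
    unfolding erel_def by auto
  have mL: "m < length E" and kA: "i * length E + m \<in> A" using m(1) by (auto simp: sel_def)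
  have ke: "i * length E + m \<in> edges (D3 E)"
    using idx_lt[OF i mL] by (simp add: edges_def)
  obtain a b where ab: "E ! m = (a,b)" by fastforce
  have "D3 E ! (i * length E + m) = ((i,a),(i,b))" using D3_nth2[OF i mL] ab by (simp add: tg_def)
  hence "conn (D3 E) A (i,a) (i,b)" using conn_step[OF kA ke] by simp
  hence "conn (D3 E) A (i,y) (i,z)" using m(2) ab conn_sym by auto
  thus ?case using step.IH conn_trans by metis
qed

lemma D1: "i < 3 \<Longrightarrow> conn (D3 E) A (i,u) (j,v) \<longleftrightarrow> (i = j \<and> conn E (sel E i A) u v)"
  using D1a[of E A i u "(j,v)"] D1b[of i E A u v] by auto

lemma sel_insert: "e < 3 * length E \<Longrightarrow>
  sel E j (insert e A) = (if j = e div length E then insert (e mod length E) (sel E j A) else sel E j A)"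
proof -
  assume e: "e < 3 * length E"
  have "k \<in> sel E j (insert e A) \<longleftrightarrow> k \<in> (if j = e div length E then insert (e mod length E) (sel E j A) else sel E j A)" for k
  proof (cases "k < length E")
    case True
    have "j * length E + k = e \<longleftrightarrow> j = e div length E \<and> k = e mod length E"
      using divmod_idx[OF True, of j] by auto
    thus ?thesis using True e by (auto simp: sel_def)
  next
    case False
    moreover have "length E > 0" using e by (cases "length E") auto
    hence "e mod length E < length E" by simp
    ultimately show ?thesis by (auto simp: sel_def)
  qed
  thus ?thesis by blast
qed

lemma D2: "A \<subseteq> edges (D3 E) \<Longrightarrow> nullity (D3 E) A = (\<Sum>j<3. nullity E (sel E j A))"
proof -
  assume s: "A \<subseteq> edges (D3 E)"
  have "finite A" using s finite_subset by (auto simp: edges_def)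
  from this s show ?thesis
  proof (induction A rule: finite_induct)
    case empty thus ?case by (simp add: sel_def)
  next
    case (insert e A)
    let ?L = "length E" let ?i = "e div ?L" let ?m = "e mod ?L"
    have e: "e < 3 * ?L" using insert by (auto simp: edges_def)
    have sA: "A \<subseteq> edges (D3 E)" using insert by auto
    have Lp: "?L > 0" using e by auto
    have i3: "?i < 3" using e by (simp add: less_mult_imp_div_less mult.commute)
    have mL: "?m < ?L" using Lp by simp
    have em: "e = ?i * ?L + ?m" by simp
    have mn: "?m \<notin> sel E ?i A" using insert(2) em by (simp add: sel_def)
    obtain a b where ab: "E ! ?m = (a,b)" by fastforce
    have De: "D3 E ! e = ((?i,a),(?i,b))" using D3_nth[OF e] ab by (simp add: tg_def)
    have c: "conn (D3 E) A (?i,a) (?i,b) \<longleftrightarrow> conn E (sel E ?i A) a b" using D1[OF i3, of E A a ?i b] by simp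
    have n1: "nullity (D3 E) (insert e A) = nullity (D3 E) A + (if conn E (sel E ?i A) a b then 1 else 0)"
      using nullity_insert[OF sA _ insert(2)] e De c by (simp add: edges_def)
    have n2: "nullity E (insert ?m (sel E ?i A)) = nullity E (sel E ?i A) + (if conn E (sel E ?i A) a b then 1 else 0)"
      using nullity_insert[OF sel_sub _ mn] mL ab by (simp add: edges_def)
    have "(\<Sum>j<3. nullity E (sel E j (insert e A))) = (\<Sum>j<3. nullity E (sel E j A) + (if j = ?i then (if conn E (sel E ?i A) a b then 1 else 0) else 0))"
      by (rule sum.cong) (auto simp: sel_insert[OF e] n2)
    also have "\<dots> = (\<Sum>j<3. nullity E (sel E j A)) + (if conn E (sel E ?i A) a b then 1 else 0)"
      using i3 by (simp add: sum.distrib)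
    finally show ?case using n1 insert.IH[OF sA] by simp
  qed
qed

definition jn :: "'v mgraph \<Rightarrow> (nat \<Rightarrow> nat set) \<Rightarrow> nat set" where
  "jn E g = {k. k < 3 * length E \<and> k mod length E \<in> g (k div length E)}"

lemma jn_sub: "jn E g \<subseteq> edges (D3 E)" by (auto simp: jn_def edges_def)

lemma sel_jn: "j < 3 \<Longrightarrow> g j \<subseteq> edges E \<Longrightarrow> sel E j (jn E g) = g j"
proof -
  assume j: "j < 3" and g: "g j \<subseteq> edges E"
  have "k \<in> sel E j (jn E g) \<longleftrightarrow> k \<in> g j" for k
  proof (cases "k < length E")
    case True
    thus ?thesis using divmod_idx[OF True, of j] idx_lt[OF j True] by (auto simp: sel_def jn_def)
  next
    case False thus ?thesis using g by (auto simp: sel_def edges_def)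
  qed
  thus ?thesis by blast
qed

lemma jn_sel: "A \<subseteq> edges (D3 E) \<Longrightarrow> jn E (\<lambda>j. sel E j A) = A"
proof -
  assume A: "A \<subseteq> edges (D3 E)"
  have "k \<in> jn E (\<lambda>j. sel E j A) \<longleftrightarrow> k \<in> A" for k
  proof (cases "k < 3 * length E")
    case True
    hence Lp: "length E > 0" by auto
    have "k div length E * length E + k mod length E = k" by simp
    thus ?thesis using True Lp by (auto simp: sel_def jn_def)
  next
    case False thus ?thesis using A by (auto simp: jn_def edges_def)
  qed
  thus ?thesis by blast
qed

definition off :: "nat \<Rightarrow> nat \<Rightarrow> nat \<times> nat" where
  "off s i = (if i = 1 then (s,0) else if i = 2 then (0,s) else (0,0))"

definition fS :: "nat \<Rightarrow> nat \<times> (nat \<times> nat) \<Rightarrow> nat \<times> nat" where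
  "fS s v = (fst (snd v) + fst (off s (fst v)), snd (snd v) + snd (off s (fst v)))"

definition sh :: "nat \<times> nat \<Rightarrow> nat \<times> nat \<Rightarrow> nat \<times> nat" where
  "sh d v = (fst v + fst d, snd v + snd d)"

lemma shift_sh: "shift d = map_prod (sh d) (sh d)"
  by (rule ext) (simp add: shift_def sh_def map_prod_def split_def)

lemma S_SS: "sierpinski (Suc (Suc n)) = sierpinski (Suc n) @ map (shift (2^n, 0)) (sierpinski (Suc n)) @ map (shift (0, 2^n)) (sierpinski (Suc n))"
  by (simp add: Let_def)

lemma pa: "map_prod (fS s) (fS s) (tg 0 x) = x" by (cases x) (simp add: tg_def fS_def off_def)
lemma pb: "map_prod (fS s) (fS s) (tg 1 x) = shift (s,0) x" by (cases x) (simp add: tg_def fS_def off_def shift_def)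
lemma pb': "map_prod (fS s) (fS s) (tg (Suc 0) x) = shift (s,0) x" by (cases x) (simp add: tg_def fS_def off_def shift_def)
lemma pc: "map_prod (fS s) (fS s) (tg 2 x) = shift (0,s) x" by (cases x) (simp add: tg_def fS_def off_def shift_def)

lemma H_eq: "sierpinski (Suc (Suc n)) = map (map_prod (fS (2^n)) (fS (2^n))) (D3 (sierpinski (Suc n)))"
  unfolding S_SS D3_def by (simp add: o_def pa pb pb' pc del: sierpinski.simps)

lemma verts_S1: "verts (sierpinski (Suc 0)) = {(0,0),(1,0),(0,1)}"
  by (auto simp: verts_def)

lemma verts_SS: "verts (sierpinski (Suc (Suc n))) = verts (sierpinski (Suc n)) \<union> sh (2^n,0) ` verts (sierpinski (Suc n)) \<union> sh (0,2^n) ` verts (sierpinski (Suc n))"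
  unfolding S_SS shift_sh by (simp add: verts_append verts_map Un_assoc)

lemma S_props: "(\<forall>v\<in>verts (sierpinski (Suc n)). fst v + snd v \<le> 2^n) \<and> (\<forall>k<3. off (2^n) k \<in> verts (sierpinski (Suc n)))"
proof (induction n)
  case 0
  have "k < 3 \<Longrightarrow> k = 0 \<or> k = 1 \<or> k = 2" for k :: nat by auto
  thus ?case by (auto simp: verts_def off_def)
next
  case (Suc n)
  let ?s = "(2::nat)^n"
  have bnd: "\<forall>v\<in>verts (sierpinski (Suc (Suc n))). fst v + snd v \<le> 2^Suc n"
    using Suc.IH unfolding verts_SS by (auto simp: sh_def)
  have t0: "off (2^Suc n) 0 \<in> verts (sierpinski (Suc (Suc n)))"
    using Suc.IH[THEN conjunct2, rule_format, of 0] unfolding verts_SS by (simp add: off_def)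
  have t1: "off (2^Suc n) 1 \<in> verts (sierpinski (Suc (Suc n)))"
  proof -
    have "(?s,0) \<in> verts (sierpinski (Suc n))" using Suc.IH[THEN conjunct2, rule_format, of 1] by (simp add: off_def)
    hence "sh (?s,0) (?s,0) \<in> verts (sierpinski (Suc (Suc n)))" unfolding verts_SS by blast
    thus ?thesis by (simp add: sh_def off_def mult_2 del: sierpinski.simps)
  qed
  have t2: "off (2^Suc n) 2 \<in> verts (sierpinski (Suc (Suc n)))"
  proof -
    have "(0,?s) \<in> verts (sierpinski (Suc n))" using Suc.IH[THEN conjunct2, rule_format, of 2] by (simp add: off_def)
    hence "sh (0,?s) (0,?s) \<in> verts (sierpinski (Suc (Suc n)))" unfolding verts_SS by blast
    thus ?thesis by (simp add: sh_def off_def mult_2 del: sierpinski.simps)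
  qed
  have "k < 3 \<Longrightarrow> k = 0 \<or> k = 1 \<or> k = 2" for k :: nat by auto
  thus ?case using bnd t0 t1 t2 by auto
qed

lemma verts_D3: "verts (D3 E) = Pair 0 ` verts E \<union> Pair 1 ` verts E \<union> Pair 2 ` verts E"
  unfolding D3_def tg_def by (simp add: verts_append verts_map Un_assoc)

definition PP :: "nat \<Rightarrow> ((nat \<times> (nat \<times> nat)) \<times> (nat \<times> (nat \<times> nat))) list" where
  "PP s = [((0, off s 1), (1, off s 0)), ((0, off s 2), (2, off s 0)), ((1, off s 2), (2, off s 1))]"

lemma ker_cases:
  assumes i: "i < 3" and j: "j < 3"
  and x: "fst x + snd x \<le> s" and y: "fst y + snd y \<le> s"
  and eq: "fS s (i,x) = fS s (j,y)"
  shows "(i = j \<and> x = y) \<or> (i = 0 \<and> j = 1 \<and> x = off s 1 \<and> y = off s 0) \<or> (i = 1 \<and> j = 0 \<and> x = off s 0 \<and> y = off s 1)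
    \<or> (i = 0 \<and> j = 2 \<and> x = off s 2 \<and> y = off s 0) \<or> (i = 2 \<and> j = 0 \<and> x = off s 0 \<and> y = off s 2)
    \<or> (i = 1 \<and> j = 2 \<and> x = off s 2 \<and> y = off s 1) \<or> (i = 2 \<and> j = 1 \<and> x = off s 1 \<and> y = off s 2)"
proof -
  obtain x1 x2 where xx: "x = (x1,x2)" by fastforce
  obtain y1 y2 where yy: "y = (y1,y2)" by fastforce
  have xs: "x1 + x2 \<le> s" "y1 + y2 \<le> s" using x y xx yy by auto
  have "i = 0 \<or> i = 1 \<or> i = 2" "j = 0 \<or> j = 1 \<or> j = 2" using i j by auto
  thus ?thesis using eq xs unfolding xx yy
    by (elim disjE; simp add: fS_def off_def; linarith)
qed

lemma PP_nth: "(D3 E @ PP s) ! (3 * length E) = ((0, off s 1), (1, off s 0))"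
  "(D3 E @ PP s) ! (3 * length E + 1) = ((0, off s 2), (2, off s 0))"
  "(D3 E @ PP s) ! (3 * length E + 2) = ((1, off s 2), (2, off s 1))"
  by (simp_all add: nth_append PP_def)

lemma PI_eq: "{length (D3 E)..<length (D3 E) + length (PP s)} = insert (3 * length E + 2) (insert (3 * length E + 1) (insert (3 * length E) {}))"
  by (auto simp: PP_def)

lemma quot_S: "quot (D3 (sierpinski (Suc n))) (fS (2^n)) (PP (2^n))"
proof -
  let ?E = "sierpinski (Suc n)" let ?s = "(2::nat)^n"
  let ?GP = "D3 ?E @ PP ?s" let ?PI = "{length (D3 ?E)..<length (D3 ?E) + length (PP ?s)}"
  have SP: "\<forall>v\<in>verts ?E. fst v + snd v \<le> ?s" "\<forall>k<3. off ?s k \<in> verts ?E" using S_props[of n] by auto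
  have tv: "(i, off ?s k) \<in> verts (D3 ?E)" if "i < 3" "k < 3" for i k
  proof -
    have "i = 0 \<or> i = 1 \<or> i = 2" using that by auto
    thus ?thesis using SP(2) that unfolding verts_D3 by auto
  qed
  have ed: "3 * length ?E + k \<in> edges ?GP" "3 * length ?E + k \<in> ?PI" if "k < 3" for k
    using that by (auto simp: edges_def PP_def)
  have c01: "conn ?GP ?PI (0, off ?s 1) (1, off ?s 0)" using conn_step[OF ed(2)[of 0] ed(1)[of 0]] PP_nth(1) by simp
  have c02: "conn ?GP ?PI (0, off ?s 2) (2, off ?s 0)" using conn_step[OF ed(2)[of 1] ed(1)[of 1]] PP_nth(2) by simp
  have c12: "conn ?GP ?PI (1, off ?s 2) (2, off ?s 1)" using conn_step[OF ed(2)[of 2] ed(1)[of 2]] PP_nth(3) by simp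
  show ?thesis
  proof
    show "\<forall>p\<in>set (PP ?s). fS ?s (fst p) = fS ?s (snd p)" by (simp add: PP_def fS_def off_def)
    show "verts (PP ?s) \<subseteq> verts (D3 ?E)" using tv by (auto simp: PP_def verts_def)
    show "\<forall>u\<in>verts (D3 ?E). \<forall>v\<in>verts (D3 ?E). fS ?s u = fS ?s v \<longrightarrow> conn ?GP ?PI u v"
    proof (intro ballI impI)
      fix u v assume u: "u \<in> verts (D3 ?E)" and v: "v \<in> verts (D3 ?E)" and eq: "fS ?s u = fS ?s v"
      obtain i x where ix: "u = (i,x)" "i < 3" "x \<in> verts ?E" using u unfolding verts_D3 by auto
      obtain j y where jy: "v = (j,y)" "j < 3" "y \<in> verts ?E" using v unfolding verts_D3 by auto
      have xb: "fst x + snd x \<le> ?s" and yb: "fst y + snd y \<le> ?s" using SP ix jy by auto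
      have eq': "fS ?s (i,x) = fS ?s (j,y)" using eq ix jy by simp
      have kc': "(i = j \<and> x = y) \<or> (i = 0 \<and> j = 1 \<and> x = off ?s 1 \<and> y = off ?s 0) \<or> (i = 1 \<and> j = 0 \<and> x = off ?s 0 \<and> y = off ?s 1)
    \<or> (i = 0 \<and> j = 2 \<and> x = off ?s 2 \<and> y = off ?s 0) \<or> (i = 2 \<and> j = 0 \<and> x = off ?s 0 \<and> y = off ?s 2)
    \<or> (i = 1 \<and> j = 2 \<and> x = off ?s 2 \<and> y = off ?s 1) \<or> (i = 2 \<and> j = 1 \<and> x = off ?s 1 \<and> y = off ?s 2)"
        by (rule ker_cases[OF ix(2) jy(2) xb yb eq'])
      show "conn ?GP ?PI u v" using kc' unfolding ix(1) jy(1)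
        by (elim disjE) (use c01 c02 c12 conn_sym in auto)
    qed
  qed
qed

lemma PP_forest: "nullity (D3 (sierpinski (Suc n)) @ PP (2^n)) {length (D3 (sierpinski (Suc n)))..<length (D3 (sierpinski (Suc n))) + length (PP (2^n))} = 0"
proof -
  let ?E = "sierpinski (Suc n)" let ?s = "(2::nat)^n"
  let ?GP = "D3 ?E @ PP ?s" let ?L = "length ?E"
  have sp: "?s \<noteq> 0" by simp
  have ed: "3 * ?L + k \<in> edges ?GP" if "k < 3" for k
    using that by (auto simp: edges_def PP_def)
  have n1: "nullity ?GP (insert (3 * ?L) {}) = 0"
    using nullity_insert[of "{}" ?GP "3 * ?L"] ed[of 0] PP_nth(1) by simp
  have c1: "\<not> conn ?GP (insert (3 * ?L) {}) (0, off ?s 2) (2, off ?s 0)"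
    using conn_insert[OF ed[of 0], of "{}"] PP_nth(1) sp by (simp add: off_def)
  have s1: "insert (3 * ?L) {} \<subseteq> edges ?GP" using ed[of 0] by auto
  have n2: "nullity ?GP (insert (3 * ?L + 1) (insert (3 * ?L) {})) = 0"
    using nullity_insert[OF s1 ed[of 1]] PP_nth(2) n1 c1 by simp
  have c2: "\<not> conn ?GP (insert (3 * ?L + 1) (insert (3 * ?L) {})) (1, off ?s 2) (2, off ?s 1)"
    using conn_insert[OF ed[of 1], of "insert (3 * ?L) {}"] conn_insert[OF ed[of 0], of "{}"] PP_nth sp by (simp add: off_def)
  have s2: "insert (3 * ?L + 1) (insert (3 * ?L) {}) \<subseteq> edges ?GP" using ed[of 0] ed[of 1] by auto
  have n3: "nullity ?GP (insert (3 * ?L + 2) (insert (3 * ?L + 1) (insert (3 * ?L) {}))) = 0"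
    using nullity_insert[OF s2 ed[of 2]] PP_nth(3) n2 c2 by simp
  thus ?thesis using PI_eq by metis
qed

definition pat :: "'v mgraph \<Rightarrow> nat set \<Rightarrow> 'v \<Rightarrow> 'v \<Rightarrow> 'v \<Rightarrow> bool \<times> bool \<times> bool" where
  "pat G A x y z = (conn G A x y, conn G A x z, conn G A y z)"

definition pc :: "bool \<times> bool \<times> bool \<Rightarrow> nat \<Rightarrow> nat \<Rightarrow> bool" where
  "pc p k k' = (if k = k' then True else if k + k' = 1 then fst p else if k + k' = 2 then fst (snd p) else snd (snd p))"

lemma conn_term: "k < 3 \<Longrightarrow> k' < 3 \<Longrightarrow> conn G A (t k) (t k') = pc (pat G A (t 0) (t 1) (t 2)) k k'"
proof -
  assume "k < 3" "k' < 3"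
  hence "k = 0 \<or> k = 1 \<or> k = 2" "k' = 0 \<or> k' = 1 \<or> k' = 2" by auto
  thus ?thesis by (elim disjE) (auto simp: pc_def pat_def intro: conn_sym)
qed

definition vt :: "nat \<Rightarrow> nat \<times> nat \<Rightarrow> nat \<times> (nat \<times> nat)" where
  "vt s x = (fst x, off s (snd x))"

definition K3 :: "(nat \<times> nat) set" where "K3 = {x. fst x < 3 \<and> snd x < 3}"

definition g0 :: "(nat \<Rightarrow> bool \<times> bool \<times> bool) \<Rightarrow> nat \<times> nat \<Rightarrow> nat \<times> nat \<Rightarrow> bool" where
  "g0 ps x y = (fst x = fst y \<and> pc (ps (fst x)) (snd x) (snd y))"

definition ext :: "('k \<Rightarrow> 'k \<Rightarrow> bool) \<Rightarrow> 'k \<Rightarrow> 'k \<Rightarrow> 'k \<Rightarrow> 'k \<Rightarrow> bool" where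
  "ext g a b u v = (g u v \<or> (g u a \<and> g b v) \<or> (g u b \<and> g a v))"

definition g1 where "g1 ps = ext (g0 ps) (0,1) (1,0)"
definition g2 where "g2 ps = ext (g1 ps) (0,2) (2,0)"
definition g3 where "g3 ps = ext (g2 ps) (1,2) (2,1)"

definition glueok :: "(nat \<Rightarrow> bool \<times> bool \<times> bool) \<Rightarrow> bool" where
  "glueok ps = (\<not> g0 ps (0,1) (1,0) \<and> \<not> g1 ps (0,2) (2,0) \<and> \<not> g2 ps (1,2) (2,1))"

definition gluepat :: "(nat \<Rightarrow> bool \<times> bool \<times> bool) \<Rightarrow> bool \<times> bool \<times> bool" where
  "gluepat ps = (g3 ps (0,0) (1,1), g3 ps (0,0) (2,2), g3 ps (1,1) (2,2))"

lemma conn_ext: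
  assumes e: "e \<in> edges G" and Ge: "G ! e = (vt s a, vt s b)"
  and IH: "\<And>x y. x \<in> K3 \<Longrightarrow> y \<in> K3 \<Longrightarrow> conn G B (vt s x) (vt s y) = g x y"
  and ab: "a \<in> K3" "b \<in> K3" and xy: "x \<in> K3" "y \<in> K3"
  shows "conn G (insert e B) (vt s x) (vt s y) = ext g a b x y"
  using conn_insert[OF e, of B "vt s x" "vt s y"] Ge IH ab xy by (simp add: ext_def)

lemma conn_D_vt:
  assumes x: "x \<in> K3" and y: "y \<in> K3"
  shows "conn (D3 E) A (vt s x) (vt s y) = g0 (\<lambda>i. pat E (sel E i A) (off s 0) (off s 1) (off s 2)) x y"
proof -
  have "conn (D3 E) A (vt s x) (vt s y) = (fst x = fst y \<and> conn E (sel E (fst x) A) (off s (snd x)) (off s (snd y)))"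
    using D1[of "fst x" E A] x by (simp add: vt_def K3_def)
  thus ?thesis using conn_term[of "snd x" "snd y" E "sel E (fst x) A" "off s"] x y by (simp add: g0_def K3_def)
qed

lemma K3_mem[simp]: "(a,b) \<in> K3 \<longleftrightarrow> a < 3 \<and> b < 3" by (simp add: K3_def)

lemma glue_main:
  fixes n :: nat and A :: "nat set"
  defines "E \<equiv> sierpinski (Suc n)" and "s \<equiv> (2::nat)^n"
  defines "ps \<equiv> (\<lambda>i. pat E (sel E i A) (off s 0) (off s 1) (off s 2))"
  assumes A: "A \<subseteq> edges (sierpinski (Suc (Suc n)))"
  shows "(nullity (sierpinski (Suc (Suc n))) A = 0 \<longleftrightarrow> (\<forall>j<3. nullity E (sel E j A) = 0) \<and> glueok ps)
     \<and> pat (sierpinski (Suc (Suc n))) A (s_top (Suc (Suc n))) (s_left (Suc (Suc n))) (s_right (Suc (Suc n))) = gluepat ps"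
proof -
  interpret q: quot "D3 E" "fS s" "PP s" using quot_S[of n] by (simp add: E_def s_def)
  have H: "sierpinski (Suc (Suc n)) = map (map_prod (fS s) (fS s)) (D3 E)" using H_eq by (simp add: E_def s_def)
  let ?GP = "D3 E @ PP s" let ?L = "length E"
  let ?PI = "{length (D3 E)..<length (D3 E) + length (PP s)}"
  have AD: "A \<subseteq> edges (D3 E)" using A H by simp
  have ed: "3 * ?L + k \<in> edges ?GP" if "k < 3" for k using that by (auto simp: edges_def PP_def)
  have e0: "3 * ?L \<in> edges ?GP" "3 * ?L + 1 \<in> edges ?GP" "3 * ?L + 2 \<in> edges ?GP" using ed[of 0] ed[of 1] ed[of 2] by auto
  have nA0: "3 * ?L \<notin> A" "3 * ?L + 1 \<notin> A" "3 * ?L + 2 \<notin> A" using AD by (auto simp: edges_def)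
  have nB: "3 * ?L + 1 \<notin> insert (3 * ?L) A" "3 * ?L + 2 \<notin> insert (3 * ?L + 1) (insert (3 * ?L) A)" using nA0 by auto
  have AGP: "A \<subseteq> edges ?GP" using AD by (auto simp: edges_def)
  have nA: "3 * ?L + k \<notin> A" for k using AD by (auto simp: edges_def)
  have SP: "\<forall>k<3. off s k \<in> verts E" using S_props[of n] by (simp add: E_def s_def)
  have vtD: "vt s x \<in> verts (D3 E)" if "x \<in> K3" for x
  proof -
    have "fst x = 0 \<or> fst x = 1 \<or> fst x = 2" "snd x < 3" using that by (auto simp: K3_def)
    thus ?thesis using SP unfolding verts_D3 vt_def by auto
  qed
  have Pv: "verts (PP s) \<subseteq> verts (D3 E)" using q.Pv .
  have L0: "conn ?GP A (vt s x) (vt s y) = g0 ps x y" if "x \<in> K3" "y \<in> K3" for x y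
    using conn_append[OF AD] conn_D_vt[OF that] by (simp add: ps_def)
  have p1: "?GP ! (3 * ?L) = (vt s (0,1), vt s (1,0))" using PP_nth(1) by (simp add: vt_def)
  have p2: "?GP ! (3 * ?L + 1) = (vt s (0,2), vt s (2,0))" using PP_nth(2) by (simp add: vt_def)
  have p3: "?GP ! (3 * ?L + 2) = (vt s (1,2), vt s (2,1))" using PP_nth(3) by (simp add: vt_def)
  have L1: "conn ?GP (insert (3 * ?L) A) (vt s x) (vt s y) = g1 ps x y" if "x \<in> K3" "y \<in> K3" for x y
    unfolding g1_def by (rule conn_ext[OF e0(1) _ L0]) (use p1 that in auto)
  have L2: "conn ?GP (insert (3 * ?L + 1) (insert (3 * ?L) A)) (vt s x) (vt s y) = g2 ps x y" if "x \<in> K3" "y \<in> K3" for x y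
    unfolding g2_def by (rule conn_ext[OF e0(2) _ L1]) (use p2 that in auto)
  have L3: "conn ?GP (insert (3 * ?L + 2) (insert (3 * ?L + 1) (insert (3 * ?L) A))) (vt s x) (vt s y) = g3 ps x y" if "x \<in> K3" "y \<in> K3" for x y
    unfolding g3_def by (rule conn_ext[OF e0(3) _ L2]) (use p3 that in auto)
  have APi: "A \<union> ?PI = insert (3 * ?L + 2) (insert (3 * ?L + 1) (insert (3 * ?L) A))"
    using PI_eq[of E s] by auto
  have N0: "nullity ?GP A = (\<Sum>j<3. nullity E (sel E j A))"
    using nullity_append[OF AD Pv] D2[OF AD] by simp
  have N1: "nullity ?GP (insert (3 * ?L) A) = nullity ?GP A + (if g0 ps (0,1) (1,0) then 1 else 0)"
    using nullity_insert[OF AGP e0(1) nA0(1)] p1 L0[of "(0,1)" "(1,0)"] by simp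
  have s1: "insert (3 * ?L) A \<subseteq> edges ?GP" using AGP e0 by auto
  have N2: "nullity ?GP (insert (3 * ?L + 1) (insert (3 * ?L) A)) = nullity ?GP (insert (3 * ?L) A) + (if g1 ps (0,2) (2,0) then 1 else 0)"
    using nullity_insert[OF s1 e0(2) nB(1)] p2 L1[of "(0,2)" "(2,0)"] by simp
  have s2: "insert (3 * ?L + 1) (insert (3 * ?L) A) \<subseteq> edges ?GP" using s1 e0 by auto
  have N3: "nullity ?GP (insert (3 * ?L + 2) (insert (3 * ?L + 1) (insert (3 * ?L) A))) = nullity ?GP (insert (3 * ?L + 1) (insert (3 * ?L) A)) + (if g2 ps (1,2) (2,1) then 1 else 0)"
    using nullity_insert[OF s2 e0(3) nB(2)] p3 L2[of "(1,2)" "(2,1)"] by simp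
  have NH: "nullity (sierpinski (Suc (Suc n))) A = nullity ?GP (A \<union> ?PI)"
    using q.Q3[OF AD] PP_forest[of n] H by (simp add: E_def s_def)
  have part1: "nullity (sierpinski (Suc (Suc n))) A = 0 \<longleftrightarrow> (\<forall>j<3. nullity E (sel E j A) = 0) \<and> glueok ps"
  proof -
    have "nullity (sierpinski (Suc (Suc n))) A = (\<Sum>j<3. nullity E (sel E j A)) + (if g0 ps (0,1) (1,0) then 1 else 0)
       + (if g1 ps (0,2) (2,0) then 1 else 0) + (if g2 ps (1,2) (2,1) then 1 else 0)"
      using NH APi N0 N1 N2 N3 by simp
    moreover have "(\<Sum>j<3. nullity E (sel E j A)) = 0 \<longleftrightarrow> (\<forall>j<3. nullity E (sel E j A) = 0)" by auto
    ultimately show ?thesis by (simp add: glueok_def)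
  qed
  have tops: "s_top (Suc (Suc n)) = fS s (vt s (0,0))" "s_left (Suc (Suc n)) = fS s (vt s (1,1))" "s_right (Suc (Suc n)) = fS s (vt s (2,2))"
    by (simp_all add: s_top_def s_left_def s_right_def fS_def vt_def off_def s_def)
  have cH: "conn (sierpinski (Suc (Suc n))) A (fS s (vt s x)) (fS s (vt s y)) = g3 ps x y" if "x \<in> K3" "y \<in> K3" for x y
    using q.Q1[OF AD vtD[OF that(1)] vtD[OF that(2)]] H APi L3[OF that] by simp
  have part2: "pat (sierpinski (Suc (Suc n))) A (s_top (Suc (Suc n))) (s_left (Suc (Suc n))) (s_right (Suc (Suc n))) = gluepat ps"
    unfolding pat_def gluepat_def tops using cH[of "(0,0)" "(1,1)"] cH[of "(0,0)" "(2,2)"] cH[of "(1,1)" "(2,2)"]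
    by (simp del: sierpinski.simps)
  show ?thesis using part1 part2 by simp
qed

lemma fiber:
  assumes "finite Z" "finite P" "h ` Z \<subseteq> P"
  shows "(\<Sum>a\<in>Z. (f (h a) :: nat)) = (\<Sum>p\<in>P. card {a\<in>Z. h a = p} * f p)"
proof -
  have "(\<Sum>a\<in>Z. f (h a)) = (\<Sum>p\<in>P. \<Sum>a\<in>{a. a \<in> Z \<and> h a = p}. f (h a))"
    using sum.group[OF assms, of "\<lambda>a. f (h a)"] by simp
  also have "\<dots> = (\<Sum>p\<in>P. card {a\<in>Z. h a = p} * f p)"
    by (rule sum.cong) auto
  finally show ?thesis .
qed

lemma card3:
  assumes Z: "finite Z" and P: "finite P" and h: "h ` Z \<subseteq> P"
  shows "card {(a,b,c). a \<in> Z \<and> b \<in> Z \<and> c \<in> Z \<and> \<Phi> (h a) (h b) (h c)}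
   = (\<Sum>p0\<in>P. \<Sum>p1\<in>P. \<Sum>p2\<in>P. if \<Phi> p0 p1 p2 then card {a\<in>Z. h a = p0} * card {a\<in>Z. h a = p1} * card {a\<in>Z. h a = p2} else 0)"
proof -
  let ?c = "\<lambda>p. card {a\<in>Z. h a = p}"
  have eqS: "{(a,b,c). a \<in> Z \<and> b \<in> Z \<and> c \<in> Z \<and> \<Phi> (h a) (h b) (h c)} = {x \<in> Z \<times> Z \<times> Z. \<Phi> (h (fst x)) (h (fst (snd x))) (h (snd (snd x)))}"
    by auto
  have "card {x \<in> Z \<times> Z \<times> Z. \<Phi> (h (fst x)) (h (fst (snd x))) (h (snd (snd x)))}
     = (\<Sum>x\<in>Z \<times> Z \<times> Z. if \<Phi> (h (fst x)) (h (fst (snd x))) (h (snd (snd x))) then 1 else 0)"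
    using Z by (simp add: sum.inter_filter[symmetric])
  also have "\<dots> = (\<Sum>a\<in>Z. \<Sum>y\<in>Z \<times> Z. if \<Phi> (h a) (h (fst y)) (h (snd y)) then 1 else 0)"
    using sum.cartesian_product[of "\<lambda>a y. if \<Phi> (h a) (h (fst y)) (h (snd y)) then (1::nat) else 0" "Z \<times> Z" Z]
    by (simp add: split_def)
  also have "\<dots> = (\<Sum>a\<in>Z. \<Sum>b\<in>Z. \<Sum>c\<in>Z. if \<Phi> (h a) (h b) (h c) then 1 else 0)"
  proof (rule sum.cong[OF refl])
    fix a show "(\<Sum>y\<in>Z \<times> Z. if \<Phi> (h a) (h (fst y)) (h (snd y)) then 1 else 0) = (\<Sum>b\<in>Z. \<Sum>c\<in>Z. if \<Phi> (h a) (h b) (h c) then (1::nat) else 0)"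
      using sum.cartesian_product[of "\<lambda>b c. if \<Phi> (h a) (h b) (h c) then (1::nat) else 0" Z Z]
      by (simp add: split_def)
  qed
  also have "\<dots> = (\<Sum>a\<in>Z. \<Sum>b\<in>Z. \<Sum>p2\<in>P. ?c p2 * (if \<Phi> (h a) (h b) p2 then 1 else 0))"
    by (intro sum.cong refl fiber[OF Z P h])
  also have "\<dots> = (\<Sum>a\<in>Z. \<Sum>p1\<in>P. ?c p1 * (\<Sum>p2\<in>P. ?c p2 * (if \<Phi> (h a) p1 p2 then 1 else 0)))"
    by (intro sum.cong refl fiber[OF Z P h])
  also have "\<dots> = (\<Sum>p0\<in>P. ?c p0 * (\<Sum>p1\<in>P. ?c p1 * (\<Sum>p2\<in>P. ?c p2 * (if \<Phi> p0 p1 p2 then 1 else 0))))"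
    by (rule fiber[OF Z P h])
  also have "\<dots> = (\<Sum>p0\<in>P. \<Sum>p1\<in>P. \<Sum>p2\<in>P. if \<Phi> p0 p1 p2 then ?c p0 * ?c p1 * ?c p2 else 0)"
    by (simp add: sum_distrib_left mult.assoc) (intro sum.cong refl, auto)
  finally show ?thesis using eqS by simp
qed

definition Pats :: "(bool \<times> bool \<times> bool) set" where
  "Pats = {(True,True,True), (True,False,False), (False,True,False), (False,False,True), (False,False,False)}"

lemma pat_Pats: "pat G A x y z \<in> Pats"
  unfolding pat_def Pats_def by (auto intro: conn_trans conn_sym)

definition tpat :: "nat \<Rightarrow> nat set \<Rightarrow> bool \<times> bool \<times> bool" where
  "tpat n A = pat (sierpinski n) A (s_top n) (s_left n) (s_right n)"

definition FZ :: "nat \<Rightarrow> nat set set" where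
  "FZ n = {A \<in> Pow (edges (sierpinski n)). nullity (sierpinski n) A = 0}"

definition cnt :: "nat \<Rightarrow> bool \<times> bool \<times> bool \<Rightarrow> nat" where
  "cnt n p = card {A \<in> FZ n. tpat n A = p}"

lemma finite_FZ: "finite (FZ n)" by (simp add: FZ_def edges_def)

definition mk :: "'a \<Rightarrow> 'a \<Rightarrow> 'a \<Rightarrow> nat \<Rightarrow> 'a" where
  "mk a b c i = (if i = 0 then a else if i = 1 then b else c)"

lemma glue_mk: "glueok ps = glueok (mk (ps 0) (ps 1) (ps 2))" "gluepat ps = gluepat (mk (ps 0) (ps 1) (ps 2))"
  by (simp_all add: glueok_def gluepat_def g3_def g2_def g1_def g0_def ext_def mk_def)

lemma off_tops: "off (2^n) 0 = s_top (Suc n)" "off (2^n) 1 = s_left (Suc n)" "off (2^n) 2 = s_right (Suc n)"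
  by (simp_all add: off_def s_top_def s_left_def s_right_def)

lemma recur:
  "cnt (Suc (Suc n)) q = (\<Sum>p0\<in>Pats. \<Sum>p1\<in>Pats. \<Sum>p2\<in>Pats.
      if glueok (mk p0 p1 p2) \<and> gluepat (mk p0 p1 p2) = q then cnt (Suc n) p0 * cnt (Suc n) p1 * cnt (Suc n) p2 else 0)"
proof -
  let ?E = "sierpinski (Suc n)" let ?H = "sierpinski (Suc (Suc n))"
  let ?X = "{A \<in> FZ (Suc (Suc n)). tpat (Suc (Suc n)) A = q}"
  let ?\<Phi> = "\<lambda>p0 p1 p2. glueok (mk p0 p1 p2) \<and> gluepat (mk p0 p1 p2) = q"
  let ?Y = "{(a,b,c). a \<in> FZ (Suc n) \<and> b \<in> FZ (Suc n) \<and> c \<in> FZ (Suc n) \<and> ?\<Phi> (tpat (Suc n) a) (tpat (Suc n) b) (tpat (Suc n) c)}"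
  have eH: "edges ?H = edges (D3 ?E)" using H_eq[of n] by simp
  have key: "A \<subseteq> edges ?H \<Longrightarrow> (nullity ?H A = 0 \<longleftrightarrow> (\<forall>j<3. nullity ?E (sel ?E j A) = 0) \<and> glueok (\<lambda>i. tpat (Suc n) (sel ?E i A)))
       \<and> tpat (Suc (Suc n)) A = gluepat (\<lambda>i. tpat (Suc n) (sel ?E i A))" for A
    using glue_main[of A n] unfolding tpat_def off_tops by simp
  have "bij_betw (\<lambda>A. (sel ?E 0 A, sel ?E 1 A, sel ?E 2 A)) ?X ?Y"
  proof -
    have I1: "\<forall>A\<in>?X. (sel ?E 0 A, sel ?E 1 A, sel ?E 2 A) \<in> ?Y"
    proof
      fix A assume "A \<in> ?X"
      hence A: "A \<subseteq> edges ?H" "nullity ?H A = 0" "tpat (Suc (Suc n)) A = q" by (auto simp: FZ_def)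
      note k = key[OF A(1)]
      have "\<forall>j<3. nullity ?E (sel ?E j A) = 0" using k A by simp
      hence "sel ?E j A \<in> FZ (Suc n)" if "j < 3" for j using that sel_sub[of ?E j A] by (auto simp: FZ_def)
      moreover have "glueok (\<lambda>i. tpat (Suc n) (sel ?E i A))" using k A by simp
      moreover have "gluepat (\<lambda>i. tpat (Suc n) (sel ?E i A)) = q" using k A by simp
      ultimately show "(sel ?E 0 A, sel ?E 1 A, sel ?E 2 A) \<in> ?Y"
        using glue_mk[of "\<lambda>i. tpat (Suc n) (sel ?E i A)"] by simp
    qed
    have I2: "\<forall>t\<in>?Y. (\<lambda>(a,b,c). jn ?E (mk a b c)) t \<in> ?X"
    proof
      fix t assume t: "t \<in> ?Y"
      obtain a b c where abc: "t = (a,b,c)" by (cases t) auto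
      have m: "a \<in> FZ (Suc n)" "b \<in> FZ (Suc n)" "c \<in> FZ (Suc n)" "?\<Phi> (tpat (Suc n) a) (tpat (Suc n) b) (tpat (Suc n) c)"
        using t abc by auto
      let ?A = "jn ?E (mk a b c)"
      have sub: "mk a b c j \<subseteq> edges ?E" for j using m by (auto simp: mk_def FZ_def)
      have sj: "sel ?E j ?A = mk a b c j" if "j < 3" for j by (rule sel_jn[OF that sub])
      have AH: "?A \<subseteq> edges ?H" using jn_sub eH by simp
      note k = key[OF AH]
      have ps: "mk (tpat (Suc n) (sel ?E 0 ?A)) (tpat (Suc n) (sel ?E 1 ?A)) (tpat (Suc n) (sel ?E 2 ?A)) = mk (tpat (Suc n) a) (tpat (Suc n) b) (tpat (Suc n) c)"
        using sj[of 0] sj[of 1] sj[of 2] by (simp add: mk_def)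
      have g1: "glueok (\<lambda>i. tpat (Suc n) (sel ?E i ?A))" "gluepat (\<lambda>i. tpat (Suc n) (sel ?E i ?A)) = q"
        using glue_mk[of "\<lambda>i. tpat (Suc n) (sel ?E i ?A)"] ps m(4) by simp_all
      have "\<forall>j<3. nullity ?E (sel ?E j ?A) = 0"
      proof (intro allI impI)
        fix j :: nat assume "j < 3"
        hence "j = 0 \<or> j = 1 \<or> j = 2" by auto
        thus "nullity ?E (sel ?E j ?A) = 0" using sj[of 0] sj[of 1] sj[of 2] m by (auto simp: mk_def FZ_def)
      qed
      hence "nullity ?H ?A = 0" using k g1 by simp
      moreover have "tpat (Suc (Suc n)) ?A = q" using k g1 by simp
      ultimately show "(\<lambda>(a,b,c). jn ?E (mk a b c)) t \<in> ?X" using AH abc by (simp add: FZ_def)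
    qed
    have I3: "(\<lambda>(a,b,c). jn ?E (mk a b c)) (sel ?E 0 A, sel ?E 1 A, sel ?E 2 A) = A" if "A \<in> ?X" for A
    proof -
      have AD: "A \<subseteq> edges (D3 ?E)" using that eH by (auto simp: FZ_def)
      have "mk (sel ?E 0 A) (sel ?E 1 A) (sel ?E 2 A) = (\<lambda>j. if j < 3 then sel ?E j A else sel ?E 2 A)"
        by (rule ext) (auto simp: mk_def numeral_3_eq_3 less_Suc_eq numeral_2_eq_2)
      hence "jn ?E (mk (sel ?E 0 A) (sel ?E 1 A) (sel ?E 2 A)) = jn ?E (\<lambda>j. sel ?E j A)"
        unfolding jn_def
        by (auto simp: less_mult_imp_div_less mult.commute)
      thus ?thesis using jn_sel[OF AD] by simp
    qed
    have I4: "(\<lambda>A. (sel ?E 0 A, sel ?E 1 A, sel ?E 2 A)) ((\<lambda>(a,b,c). jn ?E (mk a b c)) t) = t" if "t \<in> ?Y" for t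
    proof -
      obtain a b c where abc: "t = (a,b,c)" by (cases t) auto
      have sub: "mk a b c j \<subseteq> edges ?E" for j using that abc by (auto simp: mk_def FZ_def)
      show ?thesis using sel_jn[of 0 "mk a b c" ?E] sel_jn[of 1 "mk a b c" ?E] sel_jn[of 2 "mk a b c" ?E] sub[of 0] sub[of 1] sub[of 2] abc
        by (simp add: mk_def)
    qed
    show ?thesis
      by (rule bij_betw_byWitness[where f' = "\<lambda>(a,b,c). jn ?E (mk a b c)"]) (use I1 I2 I3 I4 in \<open>auto\<close>)
  qed
  hence "card ?X = card ?Y" by (rule bij_betw_same_card)
  also have "card ?Y = (\<Sum>p0\<in>Pats. \<Sum>p1\<in>Pats. \<Sum>p2\<in>Pats. if ?\<Phi> p0 p1 p2 then cnt (Suc n) p0 * cnt (Suc n) p1 * cnt (Suc n) p2 else 0)"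
  proof -
    have hP: "tpat (Suc n) ` FZ (Suc n) \<subseteq> Pats" unfolding tpat_def image_subset_iff by (blast intro: pat_Pats)
    have fP: "finite Pats" by (simp add: Pats_def)
    show ?thesis unfolding cnt_def by (rule card3[OF finite_FZ fP hP])
  qed
  finally show ?thesis by (simp add: cnt_def)
qed

lemmas gsimps = Pats_def glueok_def gluepat_def g3_def g2_def g1_def g0_def ext_def pc_def mk_def power2_eq_square power3_eq_cube algebra_simps

lemma step_s1:
  assumes "cnt (Suc n) (True,False,False) = N" "cnt (Suc n) (False,True,False) = N" "cnt (Suc n) (False,False,True) = N"
  and "cnt (Suc n) (True,True,True) = T" "cnt (Suc n) (False,False,False) = M"
  shows "cnt (Suc (Suc n)) (True,True,True) = 6*T^2*N + 3*T*N^2"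
  unfolding recur[of n] by (simp add: assms gsimps)

lemma step_s2:
  assumes "cnt (Suc n) (True,False,False) = N" "cnt (Suc n) (False,True,False) = N" "cnt (Suc n) (False,False,True) = N"
  and "cnt (Suc n) (True,True,True) = T" "cnt (Suc n) (False,False,False) = M"
  shows "cnt (Suc (Suc n)) (False,False,True) = T^2*M + 7*T*N^2 + 2*T*N*M + 4*N^3 + N^2*M"
  unfolding recur[of n] by (simp add: assms gsimps)

lemma step_s3:
  assumes "cnt (Suc n) (True,False,False) = N" "cnt (Suc n) (False,True,False) = N" "cnt (Suc n) (False,False,True) = N"
  and "cnt (Suc n) (True,True,True) = T" "cnt (Suc n) (False,False,False) = M"
  shows "cnt (Suc (Suc n)) (True,False,False) = T^2*M + 7*T*N^2 + 2*T*N*M + 4*N^3 + N^2*M"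
  unfolding recur[of n] by (simp add: assms gsimps)

lemma step_s4:
  assumes "cnt (Suc n) (True,False,False) = N" "cnt (Suc n) (False,True,False) = N" "cnt (Suc n) (False,False,True) = N"
  and "cnt (Suc n) (True,True,True) = T" "cnt (Suc n) (False,False,False) = M"
  shows "cnt (Suc (Suc n)) (False,True,False) = T^2*M + 7*T*N^2 + 2*T*N*M + 4*N^3 + N^2*M"
  unfolding recur[of n] by (simp add: assms gsimps)

lemma step_s5:
  assumes "cnt (Suc n) (True,False,False) = N" "cnt (Suc n) (False,True,False) = N" "cnt (Suc n) (False,False,True) = N"
  and "cnt (Suc n) (True,True,True) = T" "cnt (Suc n) (False,False,False) = M"
  shows "cnt (Suc (Suc n)) (False,False,False) = 12*T*N*M + 3*T*M^2 + 14*N^3 + 24*N^2*M + 9*N*M^2 + M^3"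
  unfolding recur[of n] by (simp add: assms gsimps)

lemma sum_Pow_insert:
  assumes "e \<notin> B" "finite B"
  shows "(\<Sum>A\<in>Pow (insert e B). f A) = (\<Sum>A\<in>Pow B. f A) + (\<Sum>A\<in>Pow B. f (insert e A))"
proof -
  have d: "Pow B \<inter> insert e ` Pow B = {}" using assms(1) by auto
  have i: "inj_on (insert e) (Pow B)" using assms(1) by (auto simp: inj_on_def)
  show ?thesis unfolding Pow_insert
    using sum.union_disjoint[OF _ _ d, of f] sum.reindex[OF i, of f] assms(2) by simp
qed

lemma sum_ind: "finite S \<Longrightarrow> (\<Sum>x\<in>S. if P x then (1::real) else 0) = real (card {x\<in>S. P x})"
  using sum.inter_filter[of S "\<lambda>_. (1::real)" P] by simp

lemma cnt_sum: "cnt n p = (\<Sum>A\<in>Pow (edges (sierpinski n)). if nullity (sierpinski n) A = 0 \<and> tpat n A = p then 1 else 0)"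
proof -
  have "{A \<in> FZ n. tpat n A = p} = {A \<in> Pow (edges (sierpinski n)). nullity (sierpinski n) A = 0 \<and> tpat n A = p}"
    by (auto simp: FZ_def)
  thus ?thesis unfolding cnt_def using sum.inter_filter[of "Pow (edges (sierpinski n))" "\<lambda>_. (1::nat)"]
    by (simp add: edges_def)
qed

lemma edges3: "edges [a,b,c] = insert 0 (insert 1 (insert 2 {}))"
  by (auto simp: edges_def)

lemma base_cnt:
  "cnt 1 (True,True,True) = 3" "cnt 1 (True,False,False) = 1" "cnt 1 (False,True,False) = 1"
  "cnt 1 (False,False,True) = 1" "cnt 1 (False,False,False) = 1"
  by (simp_all add: cnt_sum edges3 sum_Pow_insert nullity_insert conn_insert tpat_def pat_def
        s_top_def s_left_def s_right_def)

lemma symm: "cnt (Suc m) (True,False,False) = cnt (Suc m) (False,False,True) \<and> cnt (Suc m) (False,True,False) = cnt (Suc m) (False,False,True)"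
proof (induction m)
  case 0 thus ?case using base_cnt by simp
next
  case (Suc m)
  have a: "cnt (Suc m) (True,False,False) = cnt (Suc m) (False,False,True)" "cnt (Suc m) (False,True,False) = cnt (Suc m) (False,False,True)"
    using Suc by auto
  show ?case using step_s2[OF a refl refl refl] step_s3[OF a refl refl refl] step_s4[OF a refl refl refl] by simp
qed

lemma tw21: "tutte_weight G 2 1 A = (if nullity G A = 0 then 1 else 0)"
  by (simp add: tutte_weight_def)

lemma Tn_FZ: "Tn n 2 1 = real (card (FZ n))"
proof -
  have "Tn n 2 1 = (\<Sum>A\<in>Pow (edges (sierpinski n)). if nullity (sierpinski n) A = 0 then 1 else 0)"
    by (simp add: Tn_def tutte_def tw21)
  also have "\<dots> = real (card (FZ n))" unfolding FZ_def by (rule sum_ind) (simp add: edges_def)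
  finally show ?thesis .
qed

lemma SF_FZ: "spanning_forests (sierpinski n) = FZ n"
  unfolding spanning_forests_def FZ_def using cycle_nullity by auto

lemma FZ_split: "card (FZ n) = cnt n (True,True,True) + cnt n (True,False,False) + cnt n (False,True,False) + cnt n (False,False,True) + cnt n (False,False,False)"
proof -
  have hP: "tpat n ` FZ n \<subseteq> Pats" unfolding tpat_def image_subset_iff by (blast intro: pat_Pats)
  have fP: "finite Pats" by (simp add: Pats_def)
  have "card (FZ n) = (\<Sum>A\<in>FZ n. (\<lambda>_. 1::nat) (tpat n A))" by simp
  also have "\<dots> = (\<Sum>p\<in>Pats. card {A\<in>FZ n. tpat n A = p} * 1)" by (rule fiber[OF finite_FZ fP hP])
  also have "\<dots> = cnt n (True,True,True) + cnt n (True,False,False) + cnt n (False,True,False) + cnt n (False,False,True) + cnt n (False,False,False)"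
    by (simp add: Pats_def cnt_def)
  finally show ?thesis .
qed

lemma T2_cnt: "T2n n 2 1 = real (cnt n (True,True,True))"
proof -
  have "T2n n 2 1 = (\<Sum>A\<in>{A \<in> Pow (edges (sierpinski n)). conn (sierpinski n) A (s_top n) (s_left n) \<and> conn (sierpinski n) A (s_top n) (s_right n)}.
      if nullity (sierpinski n) A = 0 then 1 else 0)" by (simp add: T2n_def tw21)
  also have "\<dots> = real (card {A \<in> {A \<in> Pow (edges (sierpinski n)). conn (sierpinski n) A (s_top n) (s_left n) \<and> conn (sierpinski n) A (s_top n) (s_right n)}. nullity (sierpinski n) A = 0})"
    by (rule sum_ind) (simp add: edges_def)
  also have "{A \<in> {A \<in> Pow (edges (sierpinski n)). conn (sierpinski n) A (s_top n) (s_left n) \<and> conn (sierpinski n) A (s_top n) (s_right n)}. nullity (sierpinski n) A = 0}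
     = {A \<in> FZ n. tpat n A = (True,True,True)}"
    by (auto simp: FZ_def tpat_def pat_def intro: conn_trans conn_sym)
  finally show ?thesis by (simp add: cnt_def)
qed

lemma T1_cnt: "T1n n 2 1 = real (cnt n (False,False,True))"
proof -
  have "T1n n 2 1 = (\<Sum>A\<in>{A \<in> Pow (edges (sierpinski n)). conn (sierpinski n) A (s_left n) (s_right n) \<and> \<not> conn (sierpinski n) A (s_top n) (s_left n)}.
      if nullity (sierpinski n) A = 0 then 1 else 0)" by (simp add: T1n_def tw21)
  also have "\<dots> = real (card {A \<in> {A \<in> Pow (edges (sierpinski n)). conn (sierpinski n) A (s_left n) (s_right n) \<and> \<not> conn (sierpinski n) A (s_top n) (s_left n)}. nullity (sierpinski n) A = 0})"
    by (rule sum_ind) (simp add: edges_def)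
  also have "{A \<in> {A \<in> Pow (edges (sierpinski n)). conn (sierpinski n) A (s_left n) (s_right n) \<and> \<not> conn (sierpinski n) A (s_top n) (s_left n)}. nullity (sierpinski n) A = 0}
     = {A \<in> FZ n. tpat n A = (False,False,True)}"
    by (auto simp: FZ_def tpat_def pat_def intro: conn_trans conn_sym)
  finally show ?thesis by (simp add: cnt_def)
qed

lemma T0_cnt: "T0n n 2 1 = real (cnt n (False,False,False))"
proof -
  have "T0n n 2 1 = (\<Sum>A\<in>{A \<in> Pow (edges (sierpinski n)). \<not> conn (sierpinski n) A (s_top n) (s_left n) \<and> \<not> conn (sierpinski n) A (s_top n) (s_right n) \<and> \<not> conn (sierpinski n) A (s_left n) (s_right n)}.
      if nullity (sierpinski n) A = 0 then 1 else 0)" by (simp add: T0n_def tw21)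
  also have "\<dots> = real (card {A \<in> {A \<in> Pow (edges (sierpinski n)). \<not> conn (sierpinski n) A (s_top n) (s_left n) \<and> \<not> conn (sierpinski n) A (s_top n) (s_right n) \<and> \<not> conn (sierpinski n) A (s_left n) (s_right n)}. nullity (sierpinski n) A = 0})"
    by (rule sum_ind) (simp add: edges_def)
  also have "{A \<in> {A \<in> Pow (edges (sierpinski n)). \<not> conn (sierpinski n) A (s_top n) (s_left n) \<and> \<not> conn (sierpinski n) A (s_top n) (s_right n) \<and> \<not> conn (sierpinski n) A (s_left n) (s_right n)}. nullity (sierpinski n) A = 0}
     = {A \<in> FZ n. tpat n A = (False,False,False)}"
    by (auto simp: FZ_def tpat_def pat_def)
  finally show ?thesis by (simp add: cnt_def)
qed

lemma N_cnt: "Nn n 2 1 = real (cnt n (False,False,True))" by (simp add: Nn_def T1_cnt)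
lemma M_cnt: "Mn n 2 1 = real (cnt n (False,False,False))" by (simp add: Mn_def T0_cnt)

theorem proposition3p7:
  "(\<forall>n\<ge>1. real (card (spanning_forests (sierpinski n))) = Tn n 2 1
          \<and> Tn n 2 1 = T2n n 2 1 + 3 * Nn n 2 1 + Mn n 2 1
          \<and> T2n (n+1) 2 1 = 6 * (T2n n 2 1)^2 * Nn n 2 1 + 3 * T2n n 2 1 * (Nn n 2 1)^2
          \<and> Nn (n+1) 2 1 = (T2n n 2 1)^2 * Mn n 2 1 + 7 * T2n n 2 1 * (Nn n 2 1)^2
              + 2 * T2n n 2 1 * Nn n 2 1 * Mn n 2 1 + 4 * (Nn n 2 1)^3 + (Nn n 2 1)^2 * Mn n 2 1
          \<and> Mn (n+1) 2 1 = 12 * T2n n 2 1 * Nn n 2 1 * Mn n 2 1 + 3 * T2n n 2 1 * (Mn n 2 1)^2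
              + 14 * (Nn n 2 1)^3 + 24 * (Nn n 2 1)^2 * Mn n 2 1 + 9 * Nn n 2 1 * (Mn n 2 1)^2
              + (Mn n 2 1)^3)
   \<and> T2n 1 2 1 = 3 \<and> Nn 1 2 1 = 1 \<and> Mn 1 2 1 = 1"
proof (intro conjI allI impI)
  fix n :: nat assume "n \<ge> 1"
  then obtain m where nm: "n = Suc m" by (cases n) auto
  define T where "T = cnt (Suc m) (True,True,True)"
  define N where "N = cnt (Suc m) (False,False,True)"
  define M where "M = cnt (Suc m) (False,False,False)"
  have s: "cnt (Suc m) (True,False,False) = N" "cnt (Suc m) (False,True,False) = N" "cnt (Suc m) (False,False,True) = N"
    "cnt (Suc m) (True,True,True) = T" "cnt (Suc m) (False,False,False) = M"
    using symm[of m] by (auto simp: T_def N_def M_def)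
  have v: "T2n n 2 1 = real T" "Nn n 2 1 = real N" "Mn n 2 1 = real M"
    using s by (simp_all add: nm T2_cnt N_cnt M_cnt)
  show "real (card (spanning_forests (sierpinski n))) = Tn n 2 1" by (simp add: SF_FZ Tn_FZ)
  show "Tn n 2 1 = T2n n 2 1 + 3 * Nn n 2 1 + Mn n 2 1"
    unfolding v Tn_FZ FZ_split using s by (simp add: nm)
  show "T2n (n+1) 2 1 = 6 * (T2n n 2 1)^2 * Nn n 2 1 + 3 * T2n n 2 1 * (Nn n 2 1)^2"
    unfolding v T2_cnt using step_s1[OF s] s by (simp add: nm)
  show "Nn (n+1) 2 1 = (T2n n 2 1)^2 * Mn n 2 1 + 7 * T2n n 2 1 * (Nn n 2 1)^2
              + 2 * T2n n 2 1 * Nn n 2 1 * Mn n 2 1 + 4 * (Nn n 2 1)^3 + (Nn n 2 1)^2 * Mn n 2 1"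
    unfolding v N_cnt using step_s2[OF s] s by (simp add: nm)
  show "Mn (n+1) 2 1 = 12 * T2n n 2 1 * Nn n 2 1 * Mn n 2 1 + 3 * T2n n 2 1 * (Mn n 2 1)^2
              + 14 * (Nn n 2 1)^3 + 24 * (Nn n 2 1)^2 * Mn n 2 1 + 9 * Nn n 2 1 * (Mn n 2 1)^2
              + (Mn n 2 1)^3"
    unfolding v M_cnt using step_s5[OF s] s by (simp add: nm)
next
  show "T2n 1 2 1 = 3" using base_cnt by (simp add: T2_cnt)
  show "Nn 1 2 1 = 1" using base_cnt by (simp add: N_cnt)
  show "Mn 1 2 1 = 1" using base_cnt by (simp add: M_cnt)
qed

end
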